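(* Let $p>3$ be a prime number and $k$ an integer with $1\leq k\leq\frac{p-1}{2}$, and let $\zeta_p=e^{2\pi i/p}$. Then $\mathbb{Q}\!\left(\zeta_p,\sqrt[p]{\zeta_p^k+\zeta_p^{-k}}\right)/\mathbb{Q}(\zeta_p)$ is a cyclic field extension of degree $p$.
   Context: $\sqrt[p]{\zeta_p^k+\zeta_p^{-k}}$ denotes any $p$-th root of the real number $\zeta_p^k+\zeta_p^{-k}$; the field generated over $\mathbb{Q}(\zeta_p)$ does not depend on the choice. A cyclic extension is a Galois extension with cyclic Galois group. *)

theory Defs
  imports Complex_Main "HOL-Computational_Algebra.Primes"
begin

definition is_subfield :: "complex set \<Rightarrow> bool" where
  "is_subfield F \<longleftrightarrow> 0 \<in> F \<and> 1 \<in> F \<and>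
     (\<forall>x\<in>F. \<forall>y\<in>F. x + y \<in> F \<and> x * y \<in> F) \<and>
     (\<forall>x\<in>F. - x \<in> F) \<and> (\<forall>x\<in>F. x \<noteq> 0 \<longrightarrow> inverse x \<in> F)"

definition gen_field :: "complex set \<Rightarrow> complex set" where
  "gen_field S = \<Inter> {F. is_subfield F \<and> S \<subseteq> F}"

definition lin_indep_over :: "complex set \<Rightarrow> complex set \<Rightarrow> bool" where
  "lin_indep_over K B \<longleftrightarrow> (\<forall>c. (\<forall>b\<in>B. c b \<in> K) \<and> (\<Sum>b\<in>B. c b * b) = 0 \<longrightarrow> (\<forall>b\<in>B. c b = 0))"

definition span_over :: "complex set \<Rightarrow> complex set \<Rightarrow> complex set" where
  "span_over K B = {x. \<exists>c. (\<forall>b\<in>B. c b \<in> K) \<and> x = (\<Sum>b\<in>B. c b * b)}"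

definition basis_over :: "complex set \<Rightarrow> complex set \<Rightarrow> complex set \<Rightarrow> bool" where
  "basis_over K L B \<longleftrightarrow> finite B \<and> B \<subseteq> L \<and> lin_indep_over K B \<and> span_over K B = L"

definition ext_degree :: "complex set \<Rightarrow> complex set \<Rightarrow> nat \<Rightarrow> bool" where
  "ext_degree K L n \<longleftrightarrow> is_subfield K \<and> is_subfield L \<and> K \<subseteq> L \<and>
     (\<exists>B. basis_over K L B \<and> card B = n)"

definition auts :: "complex set \<Rightarrow> complex set \<Rightarrow> (complex \<Rightarrow> complex) set" where
  "auts K L = {\<sigma>. bij_betw \<sigma> L L \<and>
     (\<forall>x\<in>L. \<forall>y\<in>L. \<sigma> (x + y) = \<sigma> x + \<sigma> y \<and> \<sigma> (x * y) = \<sigma> x * \<sigma> y) \<and>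
     (\<forall>x\<in>K. \<sigma> x = x) \<and> (\<forall>x. x \<notin> L \<longrightarrow> \<sigma> x = x)}"

definition galois_ext :: "complex set \<Rightarrow> complex set \<Rightarrow> bool" where
  "galois_ext K L \<longleftrightarrow> (\<exists>n. ext_degree K L n \<and> finite (auts K L) \<and> card (auts K L) = n)"

definition cyclic_ext :: "complex set \<Rightarrow> complex set \<Rightarrow> bool" where
  "cyclic_ext K L \<longleftrightarrow> galois_ext K L \<and>
     (\<exists>\<sigma>\<in>auts K L. \<forall>\<tau>\<in>auts K L. \<exists>m::nat. \<tau> = \<sigma> ^^ m)"

end

theory Submission
  imports Defs "Berlekamp_Zassenhaus.Factor_Bound"
begin

lemma eisenstein_aux:
  fixes g h :: "int poly" and q :: int
  assumes q: "prime q" and f: "f = g * h" and lead: "\<not> q dvd lead_coeff f"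
    and low: "\<forall>i<degree f. q dvd coeff f i"
    and g0: "q dvd coeff g 0" and h0: "\<not> q dvd coeff h 0" and dh: "degree h > 0"
  shows False
proof -
  have gnz: "g \<noteq> 0" and hnz: "h \<noteq> 0" using lead f by auto
  have df: "degree f = degree g + degree h" using f gnz hnz by (simp add: degree_mult_eq)
  have "lead_coeff f = lead_coeff g * lead_coeff h" using f by (simp add: lead_coeff_mult)
  hence lg: "\<not> q dvd lead_coeff g" using lead by auto
  define i where "i = (LEAST i. \<not> q dvd coeff g i)"
  have ex: "\<not> q dvd coeff g (degree g)" using lg by simp
  have i1: "\<not> q dvd coeff g i" unfolding i_def by (rule LeastI, rule ex)
  have i2: "i \<le> degree g" unfolding i_def by (rule Least_le, rule ex)
  have i3: "\<And>j. j < i \<Longrightarrow> q dvd coeff g j" unfolding i_def using not_less_Least by blast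
  have "i < degree f" using i2 df dh by simp
  hence "q dvd coeff f i" using low by auto
  also have "coeff f i = (\<Sum>j\<le>i. coeff g j * coeff h (i - j))" using f by (simp add: coeff_mult)
  also have "\<dots> = (\<Sum>j<i. coeff g j * coeff h (i - j)) + coeff g i * coeff h 0"
    by (simp add: lessThan_Suc_atMost[symmetric])
  finally have A: "q dvd (\<Sum>j<i. coeff g j * coeff h (i - j)) + coeff g i * coeff h 0" .
  have B: "q dvd (\<Sum>j<i. coeff g j * coeff h (i - j))"
    by (rule dvd_sum) (use i3 in auto)
  have "q dvd coeff g i * coeff h 0" using A B by (simp add: dvd_add_right_iff)
  thus False using q i1 h0 by (simp add: prime_dvd_mult_iff)
qed

lemma eisenstein:
  fixes g h :: "int poly" and q :: int
  assumes q: "prime q" and f: "f = g * h" and lead: "\<not> q dvd lead_coeff f"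
    and low: "\<forall>i<degree f. q dvd coeff f i"
    and c0: "\<not> q^2 dvd coeff f 0"
  shows "degree g = 0 \<or> degree h = 0"
proof (rule ccontr)
  assume dd: "\<not> (degree g = 0 \<or> degree h = 0)"
  have gnz: "g \<noteq> 0" and hnz: "h \<noteq> 0" using lead f by auto
  have df: "degree f = degree g + degree h" using f gnz hnz by (simp add: degree_mult_eq)
  have "0 < degree f" using df dd by simp
  hence "q dvd coeff f 0" using low by auto
  moreover have cf: "coeff f 0 = coeff g 0 * coeff h 0" using f by (simp add: coeff_mult)
  ultimately have "q dvd coeff g 0 \<or> q dvd coeff h 0" using q by (simp add: prime_dvd_mult_iff)
  moreover have "\<not> (q dvd coeff g 0 \<and> q dvd coeff h 0)"
  proof
    assume "q dvd coeff g 0 \<and> q dvd coeff h 0"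
    hence "q * q dvd coeff g 0 * coeff h 0" by (auto intro: mult_dvd_mono)
    thus False using c0 cf by (simp add: power2_eq_square)
  qed
  ultimately show False
  proof (elim disjE)
    assume "q dvd coeff g 0"
    thus False using eisenstein_aux[OF q f lead low] dd
      \<open>\<not> (q dvd coeff g 0 \<and> q dvd coeff h 0)\<close> by auto
  next
    assume "q dvd coeff h 0"
    moreover have "f = h * g" using f by (simp add: mult.commute)
    ultimately show False using eisenstein_aux[OF q _ lead low] dd
      \<open>\<not> (q dvd coeff g 0 \<and> q dvd coeff h 0)\<close> by auto
  qed
qed

definition Phi :: "nat \<Rightarrow> int poly" where "Phi n = (\<Sum>i<n. monom 1 i)"

lemma coeff_Phi: "coeff (Phi n) j = (if j < n then 1 else 0)"
  unfolding Phi_def coeff_sum by (simp add: coeff_monom)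

lemma degree_Phi: assumes "n \<ge> 1" shows "degree (Phi n) = n - 1"
proof (rule antisym)
  show "degree (Phi n) \<le> n - 1" by (rule degree_le) (auto simp: coeff_Phi)
  show "n - 1 \<le> degree (Phi n)" by (rule le_degree) (use assms in \<open>simp add: coeff_Phi\<close>)
qed

lemma lead_Phi: assumes "n \<ge> 1" shows "lead_coeff (Phi n) = 1"
  using assms by (simp add: degree_Phi coeff_Phi)

lemma coeff_lin_pow: "coeff ([:1, 1:] ^ i) j = of_nat (i choose j)"
proof (cases "j \<le> i")
  case True thus ?thesis using coeff_linear_poly_power[OF True, of 1 1] by simp
next
  case False
  have "degree ([:1::'a, 1:] ^ i) \<le> i"
    by (metis degree_linear_power order_refl)
  thus ?thesis using False by (simp add: coeff_eq_0 binomial_eq_0)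
qed

lemma coeff_Psi: "coeff (Phi n \<circ>\<^sub>p [:1, 1:]) j = int (n choose Suc j)"
proof -
  have "Phi n \<circ>\<^sub>p [:1, 1:] = (\<Sum>i<n. [:1, 1:] ^ i)"
    unfolding Phi_def pcompose_hom.hom_sum
    by (intro sum.cong refl) (simp add: monom_altdef pcompose_hom.hom_power pcompose_pCons)
  hence "coeff (Phi n \<circ>\<^sub>p [:1, 1:]) j = (\<Sum>i<n. int (i choose j))"
    by (simp add: coeff_sum coeff_lin_pow[where 'a=int, of _ j, simplified])
  also have "\<dots> = int (\<Sum>i<n. i choose j)" by simp
  also have "(\<Sum>i<n. i choose j) = n choose Suc j"
  proof (cases n)
    case 0 thus ?thesis by simp
  next
    case (Suc m)
    have "{..<n} = {..m}" using Suc by auto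
    thus ?thesis using Suc by (simp add: sum_choose_upper)
  qed
  finally show ?thesis .
qed

lemma Phi_irred:
  assumes p: "prime p" and f: "Phi p = g * h"
  shows "degree g = 0 \<or> degree h = 0"
proof -
  have p1: "p \<ge> 2" using p prime_ge_2_nat by blast
  define F where "F = Phi p \<circ>\<^sub>p [:1, 1:]"
  have F: "F = (g \<circ>\<^sub>p [:1, 1:]) * (h \<circ>\<^sub>p [:1, 1:])"
    unfolding F_def f by (simp add: pcompose_mult)
  have dF: "degree F = p - 1" unfolding F_def using p1 by (simp add: degree_pcompose degree_Phi)
  have pi: "prime (int p)" using p by simp
  have "degree (g \<circ>\<^sub>p [:1, 1:]) = 0 \<or> degree (h \<circ>\<^sub>p [:1, 1:]) = 0"
  proof (rule eisenstein[OF pi F])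
    have "lead_coeff F = coeff F (p - 1)" using dF by simp
    also have "\<dots> = int (p choose p)" unfolding F_def coeff_Psi using p1 by simp
    finally have "lead_coeff F = 1" by simp
    thus "\<not> int p dvd lead_coeff F" using pi by (simp add: prime_int_iff)
    show "\<forall>i<degree F. int p dvd coeff F i"
    proof (intro allI impI)
      fix i assume "i < degree F"
      hence "Suc i < p" using dF by simp
      hence "p dvd p choose Suc i" using p by (intro dvd_choose_prime) auto
      thus "int p dvd coeff F i" unfolding F_def coeff_Psi by (simp add: int_dvd_int_iff)
    qed
    show "\<not> (int p)^2 dvd coeff F 0"
    proof
      assume "(int p)^2 dvd coeff F 0"
      moreover have "coeff F 0 = int p" unfolding F_def by (simp only: coeff_Psi) simp
      ultimately have "int p * int p dvd int p * 1" by (simp add: power2_eq_square)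
      hence "int p dvd 1" using p1 by (subst (asm) dvd_mult_cancel_left) auto
      thus False using pi by (simp add: prime_int_iff)
    qed
  qed
  thus ?thesis by (simp add: degree_pcompose)
qed


interpretation of_rat_poly_hom: map_poly_comm_ring_hom "of_rat :: rat \<Rightarrow> 'a::field_char_0" ..

definition subring_set :: "'a::comm_ring_1 set \<Rightarrow> bool" where
  "subring_set S \<longleftrightarrow> 0 \<in> S \<and> 1 \<in> S \<and> (\<forall>x\<in>S. \<forall>y\<in>S. x + y \<in> S \<and> x * y \<in> S) \<and> (\<forall>x\<in>S. - x \<in> S)"

definition polyS :: "'a::comm_ring_1 set \<Rightarrow> 'a poly \<Rightarrow> bool" where
  "polyS S f \<longleftrightarrow> (\<forall>i. coeff f i \<in> S)"

context
  fixes S :: "'a::comm_ring_1 set"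
  assumes S: "subring_set S"
begin

lemma S0: "0 \<in> S" and S1: "1 \<in> S" and Sadd: "x \<in> S \<Longrightarrow> y \<in> S \<Longrightarrow> x + y \<in> S"
  and Smult: "x \<in> S \<Longrightarrow> y \<in> S \<Longrightarrow> x * y \<in> S" and Sneg: "x \<in> S \<Longrightarrow> - x \<in> S"
  using S unfolding subring_set_def by auto

lemma Sdiff: "x \<in> S \<Longrightarrow> y \<in> S \<Longrightarrow> x - y \<in> S"
  by (metis Sadd Sneg diff_conv_add_uminus)

lemma Ssum: "(\<And>x. x \<in> A \<Longrightarrow> f x \<in> S) \<Longrightarrow> sum f A \<in> S"
  by (induction A rule: infinite_finite_induct) (auto intro: S0 Sadd)

lemma Sprod: "(\<And>x. x \<in> A \<Longrightarrow> f x \<in> S) \<Longrightarrow> prod f A \<in> S"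
  by (induction A rule: infinite_finite_induct) (auto intro: S1 Smult)

lemma Spow: "x \<in> S \<Longrightarrow> x ^ n \<in> S"
  by (induction n) (auto intro: S1 Smult)

lemma Sof_nat: "of_nat n \<in> S"
  by (induction n) (auto intro: S0 S1 Sadd)

lemma polyS_add: "polyS S f \<Longrightarrow> polyS S g \<Longrightarrow> polyS S (f + g)"
  and polyS_diff: "polyS S f \<Longrightarrow> polyS S g \<Longrightarrow> polyS S (f - g)"
  and polyS_uminus: "polyS S f \<Longrightarrow> polyS S (- f)"
  unfolding polyS_def by (auto intro: Sadd Sdiff Sneg)

lemma polyS_mult: "polyS S f \<Longrightarrow> polyS S g \<Longrightarrow> polyS S (f * g)"
  unfolding polyS_def coeff_mult by (auto intro!: Ssum Smult)

lemma polyS_monom: "c \<in> S \<Longrightarrow> polyS S (monom c n)"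
  unfolding polyS_def by (auto simp: coeff_monom intro: S0)

lemma polyS_const: "c \<in> S \<Longrightarrow> polyS S [:c:]"
  unfolding polyS_def by (auto simp: coeff_pCons split: nat.splits intro: S0)

lemma polyS_0: "polyS S 0" and polyS_1: "polyS S 1"
  unfolding polyS_def by (auto simp: coeff_1 intro: S0 S1)

lemma polyS_pCons: "c \<in> S \<Longrightarrow> polyS S f \<Longrightarrow> polyS S (pCons c f)"
  unfolding polyS_def by (auto simp: coeff_pCons split: nat.splits)

lemma polyS_smult: "c \<in> S \<Longrightarrow> polyS S f \<Longrightarrow> polyS S (smult c f)"
  unfolding polyS_def by (auto intro: Smult)

lemma polyS_pow: "polyS S f \<Longrightarrow> polyS S (f ^ n)"
  by (induction n) (auto intro: polyS_1 polyS_mult)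

lemma polyS_sum: "(\<And>x. x \<in> A \<Longrightarrow> polyS S (f x)) \<Longrightarrow> polyS S (sum f A)"
  by (induction A rule: infinite_finite_induct) (auto intro: polyS_0 polyS_add)

lemma polyS_prod: "(\<And>x. x \<in> A \<Longrightarrow> polyS S (f x)) \<Longrightarrow> polyS S (prod f A)"
  by (induction A rule: infinite_finite_induct) (auto intro: polyS_1 polyS_mult)

lemma monic_divide:
  assumes m: "lead_coeff m = 1" "polyS S m" and f: "polyS S f"
  shows "\<exists>q r. polyS S q \<and> polyS S r \<and> f = m * q + r \<and> (r = 0 \<or> degree r < degree m)"
  using f
proof (induction "degree f" arbitrary: f rule: less_induct)
  case less
  show ?case
  proof (cases "f = 0 \<or> degree f < degree m")
    case True
    thus ?thesis using less.prems by (intro exI[of _ 0] exI[of _ f]) (auto intro: polyS_0)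
  next
    case False
    hence fnz: "f \<noteq> 0" and dle: "degree m \<le> degree f" by auto
    define d where "d = degree f - degree m"
    define c where "c = lead_coeff f"
    define f' where "f' = f - monom c d * m"
    have cS: "c \<in> S" using less.prems unfolding c_def polyS_def by auto
    have f'S: "polyS S f'" unfolding f'_def
      by (intro polyS_diff polyS_mult polyS_monom less.prems m cS)
    have c1: "coeff (monom c d * m) (degree f) = c"
      using dle m(1) by (simp add: coeff_monom_mult d_def)
    have "coeff f' (degree f) = 0" unfolding f'_def using c1 by (simp add: c_def)
    have dg: "degree (monom c d * m) \<le> degree f"
      using degree_mult_le[of "monom c d" m] degree_monom_le[of c d] dle unfolding d_def by linarith
    have "degree f' \<le> degree f" unfolding f'_def using dg degree_diff_le by blast
    hence f'lt: "f' = 0 \<or> degree f' < degree f"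
      using \<open>coeff f' (degree f) = 0\<close> by (metis le_neq_implies_less leading_coeff_0_iff)
    show ?thesis
    proof (cases "f' = 0")
      case True
      hence "f = m * monom c d + 0" unfolding f'_def by (simp add: mult.commute)
      thus ?thesis using polyS_monom[OF cS] polyS_0 by blast
    next
      case False
      with f'lt have "degree f' < degree f" by auto
      from less.hyps[OF this f'S] obtain q r where qr: "polyS S q" "polyS S r" "f' = m * q + r"
        "r = 0 \<or> degree r < degree m" by blast
      have "f = m * (q + monom c d) + r" using qr(3) unfolding f'_def by (simp add: algebra_simps)
      thus ?thesis using qr polyS_add[OF qr(1) polyS_monom[OF cS]] by blast
    qed
  qed
qed

end

lemma subring_UNIV: "subring_set (UNIV :: 'a::comm_ring_1 set)"
  unfolding subring_set_def by auto

lemma polyS_UNIV: "polyS UNIV f" unfolding polyS_def by auto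

locale cyc =
  fixes p :: nat and z :: complex
  assumes pp: "prime p" and p3: "p > 3" and zdef: "z = cis (2 * pi / real p)"
begin

lemma p1: "p \<ge> 1" and p0: "p > 0" and p2: "p \<ge> 2" using p3 by auto

lemma z_pow: "z ^ j = cis (2 * pi * real j / real p)"
  unfolding zdef DeMoivre by (simp add: mult_ac)

lemma z_p: "z ^ p = 1"
  unfolding z_pow using p0 by simp

lemma z_nz: "z \<noteq> 0" unfolding zdef by simp

lemma z_pow_mod: "z ^ j = z ^ (j mod p)"
proof -
  have "z ^ j = z ^ (p * (j div p) + j mod p)" by (simp only: mult_div_mod_eq)
  also have "\<dots> = z ^ (j mod p)" by (simp only: power_add power_mult z_p) simp
  finally show ?thesis .
qed

lemma z_inj: assumes "i < p" "j < p" "z ^ i = z ^ j" shows "i = j"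
  using bij_betw_roots_unity[OF p0] assms unfolding bij_betw_def inj_on_def z_pow by auto

lemma z_pow_eq_1: "z ^ j = 1 \<longleftrightarrow> p dvd j"
proof
  assume "z ^ j = 1"
  hence "z ^ (j mod p) = z ^ 0" by (simp add: z_pow_mod[symmetric])
  hence "j mod p = 0" using z_inj[of "j mod p" 0] p0 by simp
  thus "p dvd j" by auto
next
  assume "p dvd j" then obtain m where "j = p * m" by auto
  thus "z ^ j = 1" by (simp add: power_mult z_p)
qed

lemma z_ne_1: "z \<noteq> 1" using z_pow_eq_1[of 1] p2 by auto

lemma roots_z: assumes "w ^ p = 1" shows "\<exists>j<p. w = z ^ j"
proof -
  have "w \<in> {w. w ^ p = 1}" using assms by simp
  then obtain j where "j < p" "w = cis (2 * pi * real j / real p)"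
    using bij_betw_roots_unity[OF p0] unfolding bij_betw_def by auto
  thus ?thesis unfolding z_pow[symmetric] by auto
qed

lemma sum_z: "(\<Sum>i<p. z ^ i) = 0"
  using z_ne_1 by (simp add: geometric_sum z_p)

definition ev :: "int poly \<Rightarrow> complex" where "ev f = poly (of_int_poly f) z"

lemma ev_add[simp]: "ev (f + g) = ev f + ev g" and ev_mult[simp]: "ev (f * g) = ev f * ev g"
  and ev_diff[simp]: "ev (f - g) = ev f - ev g" and ev_uminus[simp]: "ev (- f) = - ev f"
  and ev_const[simp]: "ev [:c:] = of_int c" and ev_0[simp]: "ev 0 = 0" and ev_1[simp]: "ev 1 = 1"
  and ev_X[simp]: "ev [:0, 1:] = z" and ev_pow[simp]: "ev (f ^ n) = ev f ^ n"
  and ev_smult[simp]: "ev (smult c f) = of_int c * ev f"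
  and ev_monom[simp]: "ev (monom c n) = of_int c * z ^ n"
  by (simp_all add: ev_def hom_distribs poly_monom)

lemma ev_sum: "ev (sum f A) = (\<Sum>x\<in>A. ev (f x))"
  by (simp add: ev_def hom_distribs poly_sum)

lemma ev_Phi: "ev (Phi p) = 0"
  unfolding Phi_def ev_sum using sum_z by simp


lemma evq_hom: "poly (map_poly of_rat (map_poly of_int f)) z = ev f"
  unfolding ev_def by (simp add: map_poly_map_poly o_def)

lemma rat_ind:
  fixes r :: "rat poly"
  assumes rnz: "r \<noteq> 0" and r0: "poly (map_poly of_rat r) z = 0"
  shows "degree r \<ge> p - 1"
proof -
  define evq :: "rat poly \<Rightarrow> complex" where "evq f = poly (map_poly of_rat f) z" for f
  define P where "P n \<longleftrightarrow> (\<exists>r::rat poly. r \<noteq> 0 \<and> evq r = 0 \<and> degree r = n)" for n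
  have Pr: "P (degree r)" unfolding P_def evq_def using rnz r0 by auto
  define n0 where "n0 = (LEAST n. P n)"
  have "P n0" unfolding n0_def by (rule LeastI[of P, OF Pr])
  then obtain m where m: "m \<noteq> 0" "evq m = 0" "degree m = n0" unfolding P_def by auto
  have mmin: "\<And>r'. r' \<noteq> 0 \<Longrightarrow> evq r' = 0 \<Longrightarrow> degree m \<le> degree r'"
    unfolding m(3) n0_def by (rule Least_le) (auto simp: P_def)
  define PQ where "PQ = (map_poly of_int (Phi p) :: rat poly)"
  have evPQ: "evq PQ = 0" unfolding evq_def PQ_def evq_hom ev_Phi ..
  have PQ_eq: "PQ mod m = PQ - (PQ div m) * m" by (metis add_diff_cancel_left' div_mult_mod_eq)
  have "evq (PQ mod m) = 0" unfolding PQ_eq evq_def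
    using evPQ m(2) unfolding evq_def by (simp add: hom_distribs)
  hence "PQ mod m = 0"
    using degree_mod_less[OF m(1), of PQ] mmin[of "PQ mod m"] by fastforce
  hence PQ: "PQ = (PQ div m) * m" using PQ_eq by simp
  from rat_to_int_factor[OF PQ[unfolded PQ_def]] obtain g' h' where
    gh: "Phi p = g' * h'" "degree g' = degree (map_poly of_int (Phi p) div m :: rat poly)"
    "degree h' = degree m" by blast
  have dm: "degree m \<noteq> 0"
  proof
    assume "degree m = 0"
    then obtain c where "m = [:c:]" by (metis degree_eq_zeroE)
    thus False using m by (simp add: evq_def)
  qed
  have "degree (PQ div m) = 0" using Phi_irred[OF pp gh(1)] gh(2,3) dm unfolding PQ_def by auto
  moreover have "PQ \<noteq> 0" unfolding PQ_def using lead_Phi[OF p1] by auto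
  ultimately have "degree PQ = degree m" using PQ m(1)
    by (metis add_0 degree_mult_eq mult_eq_0_iff)
  moreover have "degree PQ = p - 1" unfolding PQ_def using degree_Phi[OF p1] by simp
  moreover have "degree m \<le> degree r" using mmin[OF rnz] r0 unfolding evq_def by auto
  ultimately show ?thesis by simp
qed

lemma int_ind:
  fixes r :: "int poly"
  assumes rnz: "r \<noteq> 0" and r0: "ev r = 0"
  shows "degree r \<ge> p - 1"
  using rat_ind[of "map_poly of_int r"] rnz r0 evq_hom[of r] by simp


lemma ev_zero_dvd: assumes "ev f = 0" shows "Phi p dvd f"
proof -
  obtain q r where qr: "f = Phi p * q + r" "r = 0 \<or> degree r < degree (Phi p)"
    using monic_divide[OF subring_UNIV lead_Phi[OF p1] polyS_UNIV polyS_UNIV] by blast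
  have "ev r = 0" using assms qr(1) ev_Phi by simp
  have "r = 0"
  proof (rule ccontr)
    assume "r \<noteq> 0"
    thus False using int_ind[OF _ \<open>ev r = 0\<close>] qr(2) degree_Phi[OF p1] by auto
  qed
  thus ?thesis using qr(1) by simp
qed

lemma ev_reduce: "\<exists>g. ev g = ev f \<and> (g = 0 \<or> degree g < p - 1)"
proof -
  obtain q r where qr: "f = Phi p * q + r" "r = 0 \<or> degree r < degree (Phi p)"
    using monic_divide[OF subring_UNIV lead_Phi[OF p1] polyS_UNIV polyS_UNIV] by blast
  have "ev r = ev f" using qr(1) ev_Phi by simp
  thus ?thesis using qr(2) degree_Phi[OF p1] by auto
qed

lemma ev_unique: assumes "ev f = ev g" "f = 0 \<or> degree f < p - 1" "g = 0 \<or> degree g < p - 1"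
  shows "f = g"
proof (rule ccontr)
  assume "f \<noteq> g"
  hence "f - g \<noteq> 0" by simp
  moreover have "ev (f - g) = 0" using assms by simp
  moreover have "degree (f - g) < p - 1"
  proof -
    have "degree f \<le> p - 2" "degree g \<le> p - 2" using assms(2,3) p2 by auto
    hence "degree (f - g) \<le> p - 2" by (rule degree_diff_le)
    thus ?thesis using p2 by linarith
  qed
  ultimately show False using int_ind[of "f - g"] by simp
qed

end

context cyc begin

definition Zs :: "complex set" where "Zs = range ev"

lemma ev_pCons[simp]: "ev (pCons c f) = of_int c + z * ev f"
  unfolding ev_def by (simp add: of_int_hom.map_poly_pCons_hom)

lemma Zs_ev[simp, intro]: "ev f \<in> Zs" unfolding Zs_def by auto

lemma ZsE: assumes "x \<in> Zs" obtains f where "x = ev f" using assms unfolding Zs_def by auto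

lemma Zs_sub: "subring_set Zs"
  unfolding subring_set_def
proof (intro conjI ballI)
  show "0 \<in> Zs" using Zs_ev[of 0] by simp
  show "1 \<in> Zs" using Zs_ev[of 1] by simp
  fix x y assume "x \<in> Zs" "y \<in> Zs"
  then obtain f g where "x = ev f" "y = ev g" by (auto elim!: ZsE)
  thus "x + y \<in> Zs" "x * y \<in> Zs" using Zs_ev[of "f + g"] Zs_ev[of "f * g"] by auto
next
  fix x assume "x \<in> Zs" then obtain f where "x = ev f" by (auto elim!: ZsE)
  thus "- x \<in> Zs" using Zs_ev[of "- f"] by auto
qed

lemmas Zs_0 = S0[OF Zs_sub] and Zs_1 = S1[OF Zs_sub] and Zs_add = Sadd[OF Zs_sub]
  and Zs_mult = Smult[OF Zs_sub] and Zs_uminus = Sneg[OF Zs_sub] and Zs_diff = Sdiff[OF Zs_sub]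
  and Zs_sum = Ssum[OF Zs_sub] and Zs_prod = Sprod[OF Zs_sub] and Zs_pow = Spow[OF Zs_sub]
  and Zs_of_nat = Sof_nat[OF Zs_sub]

lemma Zs_of_int: "of_int c \<in> Zs" using Zs_ev[of "[:c:]"] by simp

lemma Zs_z: "z \<in> Zs" using Zs_ev[of "[:0,1:]"] by simp

definition lam :: complex where "lam = 1 - z"

lemma lam_Zs: "lam \<in> Zs" unfolding lam_def by (intro Zs_diff Zs_1 Zs_z)

lemma lam_nz: "lam \<noteq> 0" unfolding lam_def using z_ne_1 by simp

definition dZ :: "complex \<Rightarrow> complex \<Rightarrow> bool" where "dZ a b \<longleftrightarrow> (\<exists>w\<in>Zs. b = a * w)"

lemma dZ_refl: "dZ a a" unfolding dZ_def using Zs_1 by force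
lemma dZ_0: "dZ a 0" unfolding dZ_def using Zs_0 by force
lemma dZ_1: "b \<in> Zs \<Longrightarrow> dZ 1 b" unfolding dZ_def by auto

lemma dZ_add: "dZ a b \<Longrightarrow> dZ a c \<Longrightarrow> dZ a (b + c)"
  unfolding dZ_def by (auto intro!: bexI[of _ "_ + _"] Zs_add simp: algebra_simps)
lemma dZ_diff: "dZ a b \<Longrightarrow> dZ a c \<Longrightarrow> dZ a (b - c)"
  unfolding dZ_def by (auto intro!: bexI[of _ "_ - _"] Zs_diff simp: algebra_simps)
lemma dZ_uminus: "dZ a b \<Longrightarrow> dZ a (- b)"
  unfolding dZ_def by (auto intro!: bexI[of _ "- _"] Zs_uminus)
lemma dZ_uminus_iff: "dZ a (- b) \<longleftrightarrow> dZ a b"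
  using dZ_uminus[of a b] dZ_uminus[of a "- b"] by auto
lemma dZ_mult_right: "dZ a b \<Longrightarrow> c \<in> Zs \<Longrightarrow> dZ a (b * c)"
  unfolding dZ_def by (auto intro!: bexI[of _ "_ * _"] Zs_mult simp: algebra_simps)
lemma dZ_mult_left: "dZ a b \<Longrightarrow> c \<in> Zs \<Longrightarrow> dZ a (c * b)"
  using dZ_mult_right[of a b c] by (simp add: mult.commute)
lemma dZ_trans: "dZ a b \<Longrightarrow> dZ b c \<Longrightarrow> dZ a c"
  unfolding dZ_def by (auto intro!: bexI[of _ "_ * _"] Zs_mult simp: algebra_simps)
lemma dZ_sum: "(\<And>i. i \<in> A \<Longrightarrow> dZ a (f i)) \<Longrightarrow> dZ a (sum f A)"
  by (induction A rule: infinite_finite_induct) (auto intro: dZ_0 dZ_add)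
lemma dZ_times: "c \<in> Zs \<Longrightarrow> dZ a (a * c)"
  unfolding dZ_def by auto
lemma dZ_pow_mono: "m \<le> n \<Longrightarrow> a \<in> Zs \<Longrightarrow> dZ (a ^ m) (a ^ n)"
  unfolding dZ_def by (intro bexI[of _ "a ^ (n - m)"] Zs_pow) (auto simp: power_add[symmetric])
lemma dZ_Zs: "a \<in> Zs \<Longrightarrow> dZ a b \<Longrightarrow> b \<in> Zs"
  unfolding dZ_def by (auto intro: Zs_mult)
lemma dZ_cancel: "a \<noteq> 0 \<Longrightarrow> dZ (a * b) (a * c) \<Longrightarrow> dZ b c"
  unfolding dZ_def by auto
lemma dZ_pow: "dZ a b \<Longrightarrow> dZ (a ^ n) (b ^ n)"
  unfolding dZ_def by (auto intro!: bexI[of _ "_ ^ n"] Zs_pow simp: power_mult_distrib)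

lemma ev_pcompose: "ev (f \<circ>\<^sub>p g) = poly (of_int_poly f) (ev g)"
  unfolding ev_def by (simp add: hom_distribs poly_pcompose)

lemma cong1: "dZ lam (ev f - of_int (poly f 1))"
proof -
  have "poly (f - [:poly f 1:]) (- (-1)) = 0" by simp
  then obtain h where h: "f - [:poly f 1:] = [:-1, 1:] * h"
    by (metis dvd_def dvd_iff_poly_eq_0)
  have "ev f - of_int (poly f 1) = ev (f - [:poly f 1:])" by simp
  also have "\<dots> = lam * (- ev h)" unfolding h lam_def by (simp add: algebra_simps)
  finally show ?thesis unfolding dZ_def by (intro bexI[of _ "- ev h"]) (auto intro: Zs_uminus)
qed

lemma poly_Phi_1: "poly (Phi p) 1 = int p"
  unfolding Phi_def by (simp add: poly_sum poly_monom)

lemma odd_p: "odd p" using prime_odd_nat[OF pp] p3 by simp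

lemmas coeff_Psi' = coeff_Psi[simplified]

definition G :: "int poly" where "G = (\<Sum>i<p-1. monom (int (p choose Suc i) div int p) i)"

lemma coeff_G: "coeff G i = (if i < p - 1 then int (p choose Suc i) div int p else 0)"
  unfolding G_def coeff_sum by (simp add: coeff_monom)

lemma Psi_split: "Phi p \<circ>\<^sub>p [:1, 1:] = smult (int p) G + monom 1 (p - 1)"
proof (rule poly_eqI)
  fix i
  show "coeff (Phi p \<circ>\<^sub>p [:1, 1:]) i = coeff (smult (int p) G + monom 1 (p - 1)) i"
  proof (cases "i < p - 1")
    case True
    hence "p dvd p choose Suc i" using pp by (intro dvd_choose_prime) auto
    hence "int p dvd int (p choose Suc i)" by (simp add: int_dvd_int_iff)
    thus ?thesis using True by (simp add: coeff_Psi' coeff_G coeff_monom)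
  next
    case False
    show ?thesis
    proof (cases "i = p - 1")
      case True thus ?thesis using p2 by (simp add: coeff_Psi' coeff_G coeff_monom)
    next
      case False
      hence "p < Suc i" using \<open>\<not> i < p - 1\<close> by auto
      thus ?thesis using False \<open>\<not> i < p - 1\<close> by (simp add: coeff_Psi' coeff_G coeff_monom binomial_eq_0)
    qed
  qed
qed

lemma coeff_G0: "coeff G 0 = 1"
  using p3 by (simp add: coeff_G)

lemma Phi_shift: "Phi p = (Phi p \<circ>\<^sub>p [:1, 1:]) \<circ>\<^sub>p [:-1, 1:]"
proof -
  have "[:1, 1:] \<circ>\<^sub>p [:-1, 1::int:] = [:0, 1:]" by (rule poly_eqI) (simp add: coeff_pCons split: nat.split)
  thus ?thesis unfolding pcompose_assoc[symmetric] by (simp only: pcompose_idR)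
qed

lemma E: "\<exists>B\<in>Zs. lam ^ (p - 1) = of_nat p * (lam * B - 1)"
proof -
  have "[:0, 1:] dvd (G - 1)" using coeff_G0 by (subst dvd_iff_poly_eq_0) (simp add: poly_0_coeff_0)
  then obtain G2 where G2: "G - 1 = [:0, 1:] * G2" by (auto simp: dvd_def)
  have ev1: "ev [:-1, 1:] = - lam" unfolding lam_def by simp
  have "0 = ev (Phi p)" using ev_Phi by simp
  also have "\<dots> = poly (of_int_poly (smult (int p) G + monom 1 (p - 1))) (- lam)"
    by (subst Phi_shift) (simp only: ev_pcompose Psi_split ev1)
  also have "\<dots> = of_nat p * poly (of_int_poly G) (- lam) + (- lam) ^ (p - 1)"
    by (simp add: hom_distribs poly_monom)
  also have "(- lam) ^ (p - 1) = lam ^ (p - 1)"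
  proof -
    obtain m where "p - 1 = 2 * m" using odd_p p2 by (metis odd_two_times_div_two_nat)
    thus ?thesis by simp
  qed
  also have "poly (of_int_poly G) (- lam) = 1 - lam * ev (G2 \<circ>\<^sub>p [:-1, 1:])"
  proof -
    have "G = 1 + [:0, 1:] * G2" using G2 by (simp add: algebra_simps)
    hence "poly (of_int_poly G) (- lam) = 1 + (- lam) * poly (of_int_poly G2) (- lam)"
      by (simp add: hom_distribs)
    also have "poly (of_int_poly G2) (- lam) = ev (G2 \<circ>\<^sub>p [:-1, 1:])" by (simp only: ev_pcompose ev1)
    finally show ?thesis by simp
  qed
  finally have "0 = of_nat p * (1 - lam * ev (G2 \<circ>\<^sub>p [:-1, 1:])) + lam ^ (p - 1)" .
  hence "lam ^ (p - 1) = of_nat p * (lam * ev (G2 \<circ>\<^sub>p [:-1, 1:]) - 1)"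
    by (simp add: algebra_simps add_eq_0_iff2)
  thus ?thesis by blast
qed



lemma lam_pow_dvd_p: "j \<le> p - 1 \<Longrightarrow> dZ (lam ^ j) (of_nat p)"
proof (induction j)
  case 0 thus ?case using dZ_1 Zs_of_nat by simp
next
  case (Suc j)
  obtain B where B: "B \<in> Zs" "lam ^ (p - 1) = of_nat p * (lam * B - 1)" using E by blast
  have pe: "of_nat p = lam * of_nat p * B - lam ^ (p - 1)" using B(2) by (simp add: algebra_simps)
  have "dZ (lam ^ j) (of_nat p)" using Suc by simp
  hence "dZ (lam ^ Suc j) (lam * of_nat p)" unfolding dZ_def by auto
  hence A: "dZ (lam ^ Suc j) (lam * of_nat p * B)" by (rule dZ_mult_right[OF _ B(1)])
  have "dZ (lam ^ Suc j) (lam ^ (p - 1))" using Suc.prems by (intro dZ_pow_mono lam_Zs)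
  thus ?case using dZ_diff[OF A] pe by metis
qed

lemma p_dvd_lam_pow: "dZ (of_nat p) (lam ^ (p - 1))"
proof -
  obtain B where B: "B \<in> Zs" "lam ^ (p - 1) = of_nat p * (lam * B - 1)" using E by blast
  thus ?thesis unfolding dZ_def by (auto intro!: Zs_diff Zs_mult lam_Zs Zs_1)
qed

lemma lam_dvd_p: "dZ lam (of_nat p)" using lam_pow_dvd_p[of 1] p2 by simp

lemma lam_dvd_iff: "dZ lam (ev f) \<longleftrightarrow> int p dvd poly f 1"
proof
  assume "int p dvd poly f 1"
  then obtain c where c: "poly f 1 = int p * c" by (auto simp: dvd_def)
  have "dZ lam (of_int (poly f 1))" unfolding c using dZ_mult_right[OF lam_dvd_p Zs_of_int[of c]] by simp
  from dZ_add[OF cong1[of f] this] show "dZ lam (ev f)" by simp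
next
  assume "dZ lam (ev f)"
  then obtain w where "w \<in> Zs" "ev f = lam * w" unfolding dZ_def by auto
  then obtain h where h: "ev f = lam * ev h" by (auto elim: ZsE)
  have "ev (f - [:1, -1:] * h) = 0" using h unfolding lam_def by (simp add: algebra_simps)
  hence "Phi p dvd (f - [:1, -1:] * h)" by (rule ev_zero_dvd)
  then obtain q where q: "f - [:1, -1:] * h = Phi p * q" by (rule dvdE)
  have "poly f 1 = poly (f - [:1, -1:] * h) 1" by simp
  also have "\<dots> = int p * poly q 1" unfolding q by (simp add: poly_Phi_1)
  finally show "int p dvd poly f 1" by simp
qed

lemma lam_int: "dZ lam (of_int n) \<longleftrightarrow> int p dvd n"
  using lam_dvd_iff[of "[:n:]"] by simp

lemma lam_prime: assumes "x \<in> Zs" "y \<in> Zs" "dZ lam (x * y)" shows "dZ lam x \<or> dZ lam y"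
proof -
  obtain f g where fg: "x = ev f" "y = ev g" using assms by (auto elim!: ZsE)
  have "int p dvd poly f 1 * poly g 1" using assms(3) lam_dvd_iff[of "f * g"] fg by simp
  hence "int p dvd poly f 1 \<or> int p dvd poly g 1" using pp by (simp add: prime_dvd_mult_iff)
  thus ?thesis using lam_dvd_iff fg by auto
qed

lemma lam_prime_pow: assumes "x \<in> Zs" "dZ lam (x ^ n)" "n > 0" shows "dZ lam x"
  using assms(2,3)
proof (induction n)
  case (Suc n)
  show ?case
  proof (cases "n = 0")
    case True thus ?thesis using Suc by simp
  next
    case False
    have "dZ lam x \<or> dZ lam (x ^ n)" using lam_prime[OF assms(1) Zs_pow[OF assms(1)]] Suc.prems by simp
    thus ?thesis using Suc False by auto
  qed
qed simp

end

lemma exists_step: "P (0::nat) \<Longrightarrow> \<not> P N \<Longrightarrow> \<exists>e. P e \<and> \<not> P (Suc e)"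
  by (induction N) auto

context cyc begin

lemma lam_pow_p_pow: "dZ (of_nat p ^ n) (lam ^ ((p - 1) * n))"
  unfolding power_mult by (rule dZ_pow[OF p_dvd_lam_pow])

lemma finite_mult: assumes x: "x \<in> Zs" "x \<noteq> 0" shows "\<exists>N. \<not> dZ (lam ^ N) x"
proof (rule ccontr)
  assume "\<not> (\<exists>N. \<not> dZ (lam ^ N) x)"
  hence all: "\<And>N. dZ (lam ^ N) x" by auto
  have pn: "dZ (of_nat p ^ n) x" for n using dZ_trans[OF lam_pow_p_pow all] .
  obtain f0 where "x = ev f0" using x by (auto elim: ZsE)
  then obtain f where f: "x = ev f" "f = 0 \<or> degree f < p - 1" using ev_reduce by metis
  have "f \<noteq> 0" using f x by auto
  then obtain i where ci: "coeff f i \<noteq> 0" by (metis leading_coeff_0_iff)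
  define n where "n = nat \<bar>coeff f i\<bar>"
  obtain w where w: "w \<in> Zs" "x = of_nat p ^ n * w" using pn[of n] unfolding dZ_def by auto
  obtain g0 where "w = ev g0" using w by (auto elim: ZsE)
  then obtain g where g: "w = ev g" "g = 0 \<or> degree g < p - 1" using ev_reduce by metis
  have "ev f = ev (smult (int p ^ n) g)" using f w g by simp
  moreover have "smult (int p ^ n) g = 0 \<or> degree (smult (int p ^ n) g) < p - 1"
    using g(2) by (cases "g = 0") (auto simp: le_less_trans[OF degree_smult_le])
  ultimately have "f = smult (int p ^ n) g" using ev_unique f(2) by blast
  hence "coeff f i = int p ^ n * coeff g i" by simp
  hence "int p ^ n dvd coeff f i" by simp
  hence "\<bar>int p ^ n\<bar> \<le> \<bar>coeff f i\<bar>" by (rule dvd_imp_le_int[OF ci])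
  hence "int p ^ n \<le> \<bar>coeff f i\<bar>" by simp
  moreover have "int n < int p ^ n"
  proof -
    have "n < 2 ^ n" by (rule less_exp)
    also have "(2::nat) ^ n \<le> p ^ n" using p2 by (simp add: power_mono)
    finally have "int n < int (p ^ n)" by linarith
    thus ?thesis by simp
  qed
  ultimately show False unfolding n_def by simp
qed

lemma decomp: assumes x: "x \<in> Zs" "x \<noteq> 0"
  shows "\<exists>e y. y \<in> Zs \<and> x = lam ^ e * y \<and> \<not> dZ lam y"
proof -
  obtain N where "\<not> dZ (lam ^ N) x" using finite_mult[OF x] by auto
  moreover have "dZ (lam ^ 0) x" using x dZ_1 by simp
  ultimately obtain e where e: "dZ (lam ^ e) x" "\<not> dZ (lam ^ Suc e) x"
    using exists_step[of "\<lambda>e. dZ (lam ^ e) x" N] by blast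
  then obtain y where y: "y \<in> Zs" "x = lam ^ e * y" unfolding dZ_def by auto
  have "\<not> dZ lam y"
  proof
    assume "dZ lam y"
    then obtain v where "v \<in> Zs" "y = lam * v" unfolding dZ_def by auto
    hence "dZ (lam ^ Suc e) x" using y unfolding dZ_def by (auto simp: mult_ac)
    thus False using e by simp
  qed
  thus ?thesis using y by blast
qed

lemma lam_cancel: assumes "lam ^ m * X = lam ^ n * Y" "m < n" "Y \<in> Zs" shows "dZ lam X"
proof -
  have "lam ^ n = lam ^ (m + Suc (n - m - 1))" using assms(2) by simp
  also have "\<dots> = lam ^ m * lam * lam ^ (n - m - 1)" by (simp add: power_add)
  finally have "lam ^ m * X = lam ^ m * (lam * (lam ^ (n - m - 1) * Y))"
    using assms(1) by (simp add: mult_ac)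
  hence "X = lam * (lam ^ (n - m - 1) * Y)" using lam_nz by simp
  thus ?thesis unfolding dZ_def using assms(3) by (auto intro!: Zs_mult Zs_pow lam_Zs)
qed

lemma pow_cong: assumes x: "x \<in> Zs" and y: "y \<in> Zs" and d: "dZ lam (x - y)"
  shows "dZ (lam ^ 3) (x ^ p - y ^ p)"
proof -
  obtain t where t: "t \<in> Zs" "x - y = lam * t" using d unfolding dZ_def by auto
  have xe: "x = lam * t + y" using t by (simp add: algebra_simps)
  define F where "F i = of_nat (p choose i) * (lam * t) ^ i * y ^ (p - i)" for i
  have "x ^ p = (\<Sum>i\<le>p. F i)" unfolding xe F_def by (rule binomial_ring)
  also have "\<dots> = F 0 + (\<Sum>i\<le>p - 1. F (Suc i))"
    using sum.atMost_Suc_shift[of F "p - 1"] p2 by (simp add: Suc_diff_1[OF p0])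
  also have "F 0 = y ^ p" by (simp add: F_def)
  finally have eq: "x ^ p - y ^ p = (\<Sum>i\<le>p - 1. F (Suc i))" by simp
  have lp: "dZ (lam ^ 3) (of_nat p)" using lam_pow_dvd_p[of 3] p3 by simp
  have "dZ (lam ^ 3) (F (Suc i))" if i: "i \<le> p - 1" for i
  proof (cases "Suc i < p")
    case True
    hence "p dvd p choose Suc i" using pp by (intro dvd_choose_prime) auto
    then obtain m where m: "p choose Suc i = p * m" by auto
    have "F (Suc i) = of_nat p * (of_nat m * (lam * t) ^ Suc i * y ^ (p - Suc i))"
      unfolding F_def m by (simp only: of_nat_mult mult.assoc)
    moreover have "of_nat m * (lam * t) ^ Suc i * y ^ (p - Suc i) \<in> Zs"
      by (intro Zs_mult Zs_pow Zs_of_nat lam_Zs t(1) y)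
    ultimately show ?thesis using dZ_mult_right[OF lp] by simp
  next
    case False
    hence si: "Suc i = p" using i p0 by auto
    have "lam ^ p = lam ^ (3 + (p - 3))" using p3 by simp
    also have "\<dots> = lam ^ 3 * lam ^ (p - 3)" by (rule power_add)
    finally have lp3: "lam ^ p = lam ^ 3 * lam ^ (p - 3)" .
    have "F (Suc i) = (lam * t) ^ p" unfolding F_def si by simp
    also have "\<dots> = lam ^ 3 * (lam ^ (p - 3) * t ^ p)" by (simp only: power_mult_distrib lp3 mult.assoc)
    finally have "F (Suc i) = lam ^ 3 * (lam ^ (p - 3) * t ^ p)" .
    moreover have "lam ^ (p - 3) * t ^ p \<in> Zs" by (intro Zs_mult Zs_pow lam_Zs t(1))
    ultimately show ?thesis unfolding dZ_def by blast
  qed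
  thus ?thesis unfolding eq by (intro dZ_sum) auto
qed

definition Fr :: "complex set" where "Fr = {x / y | x y. x \<in> Zs \<and> y \<in> Zs \<and> y \<noteq> 0}"

lemma FrI: "x \<in> Zs \<Longrightarrow> y \<in> Zs \<Longrightarrow> y \<noteq> 0 \<Longrightarrow> x / y \<in> Fr"
  unfolding Fr_def by blast

lemma Fr_subfield: "is_subfield Fr"
  unfolding is_subfield_def
proof (intro conjI ballI impI)
  show "0 \<in> Fr" using FrI[OF Zs_0 Zs_1] by simp
  show "1 \<in> Fr" using FrI[OF Zs_1 Zs_1] by simp
next
  fix u v assume "u \<in> Fr" "v \<in> Fr"
  then obtain a b c d where abcd: "u = a / b" "v = c / d" "a \<in> Zs" "b \<in> Zs" "c \<in> Zs" "d \<in> Zs"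
    "b \<noteq> 0" "d \<noteq> 0" unfolding Fr_def by blast
  have "u + v = (a * d + c * b) / (b * d)" using abcd by (simp add: field_simps)
  moreover have "a * d + c * b \<in> Zs" "b * d \<in> Zs" "b * d \<noteq> 0" using abcd by (auto intro!: Zs_add Zs_mult)
  ultimately show "u + v \<in> Fr" unfolding Fr_def by blast
  have "u * v = (a * c) / (b * d)" using abcd by simp
  moreover have "a * c \<in> Zs" "b * d \<in> Zs" "b * d \<noteq> 0" using abcd by (auto intro!: Zs_mult)
  ultimately show "u * v \<in> Fr" unfolding Fr_def by blast
next
  fix u assume "u \<in> Fr"
  then obtain a b where ab: "u = a / b" "a \<in> Zs" "b \<in> Zs" "b \<noteq> 0" unfolding Fr_def by blast
  have "- u = (- a) / b" using ab by simp
  moreover have "- a \<in> Zs" using ab by (auto intro!: Zs_uminus)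
  ultimately show "- u \<in> Fr" unfolding Fr_def using ab by blast
  assume "u \<noteq> 0"
  hence "a \<noteq> 0" using ab by auto
  have "inverse u = b / a" using ab by simp
  thus "inverse u \<in> Fr" unfolding Fr_def using ab \<open>a \<noteq> 0\<close> by blast
qed

lemma z_Fr: "z \<in> Fr"
  using FrI[OF Zs_z Zs_1] by simp

lemma gen_field_Fr: "gen_field {z} \<subseteq> Fr"
  unfolding gen_field_def using Fr_subfield z_Fr by auto


lemma no_root:
  assumes k: "1 \<le> k" "k < p" and b: "\<beta> \<in> gen_field {z}" "\<beta> ^ p = z ^ k + inverse (z ^ k)"
  shows False
proof -
  define a where "a = z ^ k + inverse (z ^ k)"
  have inv: "inverse (z ^ k) = z ^ (p - k)"
  proof -
    have "z ^ k * z ^ (p - k) = 1" using k z_p by (simp add: power_add[symmetric])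
    thus ?thesis by (simp add: inverse_unique)
  qed
  define s where "s = (\<Sum>i<k. z ^ i)"
  have sZ: "s \<in> Zs" unfolding s_def by (intro Zs_sum Zs_pow Zs_z)
  define mu where "mu = z ^ (p - k) * s ^ 2"
  have muZ: "mu \<in> Zs" unfolding mu_def by (intro Zs_mult Zs_pow Zs_z sZ)
  have zk1: "z ^ k - 1 = (z - 1) * s" unfolding s_def by (rule power_diff_1_eq)
  have zz: "z ^ (p - k) * z ^ k = 1" using k z_p by (simp add: power_add[symmetric])
  have a_eq: "a = 2 + lam ^ 2 * mu"
  proof -
    have "lam ^ 2 * mu = z ^ (p - k) * (z ^ k - 1) ^ 2"
      unfolding mu_def zk1 lam_def by (simp add: power_mult_distrib power2_commute mult_ac)
    also have "\<dots> = (z ^ (p - k) * z ^ k) * z ^ k - 2 * (z ^ (p - k) * z ^ k) + z ^ (p - k)"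
      by (simp add: power2_eq_square algebra_simps)
    also have "\<dots> = z ^ k - 2 + z ^ (p - k)" unfolding zz by simp
    finally show ?thesis unfolding a_def inv by simp
  qed
  have aZ: "a \<in> Zs" unfolding a_eq by (intro Zs_add Zs_mult Zs_pow lam_Zs muZ) (use Zs_of_nat[of 2] in simp)
  have a_not: "\<not> dZ lam a"
  proof
    assume "dZ lam a"
    moreover have "dZ lam (lam ^ 2 * mu)" unfolding dZ_def
      by (intro bexI[of _ "lam * mu"]) (auto simp: power2_eq_square intro!: Zs_mult lam_Zs muZ)
    ultimately have "dZ lam (a - lam ^ 2 * mu)" by (rule dZ_diff)
    hence "dZ lam (of_int 2)" unfolding a_eq by simp
    hence "int p dvd 2" using lam_int by blast
    hence "p dvd 2" by presburger
    thus False using p3 by (auto dest: dvd_imp_le)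
  qed
  have a0: "a \<noteq> 0" using a_not dZ_0 by auto
  have "\<beta> \<in> Fr" using b(1) gen_field_Fr by auto
  then obtain g0 d0 where gd0: "\<beta> = g0 / d0" "g0 \<in> Zs" "d0 \<in> Zs" "d0 \<noteq> 0" unfolding Fr_def by blast
  have eq0: "g0 ^ p = d0 ^ p * a" using b(2) gd0 unfolding a_def[symmetric]
    by (simp add: power_divide field_simps)
  have g00: "g0 \<noteq> 0"
  proof
    assume "g0 = 0"
    hence "d0 ^ p * a = 0" using eq0 p0 by (simp add: zero_power)
    thus False using a0 gd0(4) by simp
  qed
  obtain e d where d: "d \<in> Zs" "d0 = lam ^ e * d" "\<not> dZ lam d" using decomp[OF gd0(3,4)] by blast
  obtain e' g where g: "g \<in> Zs" "g0 = lam ^ e' * g" "\<not> dZ lam g" using decomp[OF gd0(2) g00] by blast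
  have eq1: "lam ^ (e' * p) * g ^ p = lam ^ (e * p) * (d ^ p * a)"
    using eq0 unfolding d(2) g(2) by (simp add: power_mult_distrib power_mult mult_ac)
  have eq: "g ^ p = d ^ p * a"
  proof (cases "e' * p < e * p")
    case True
    have "dZ lam (g ^ p)" by (rule lam_cancel[OF eq1 True]) (intro Zs_mult Zs_pow d aZ)
    hence "dZ lam g" using lam_prime_pow[OF g(1)] p0 by blast
    thus ?thesis using g by simp
  next
    case False
    show ?thesis
    proof (cases "e * p < e' * p")
      case True
      have "dZ lam (d ^ p * a)" by (rule lam_cancel[OF eq1[symmetric] True]) (intro Zs_pow g)
      hence "dZ lam (d ^ p) \<or> dZ lam a" using lam_prime[OF Zs_pow[OF d(1)] aZ] by blast
      hence "dZ lam d" using lam_prime_pow[OF d(1)] p0 a_not by blast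
      thus ?thesis using d by simp
    next
      case False
      hence ep: "e' * p = e * p" using \<open>\<not> e' * p < e * p\<close> by linarith
      have "lam ^ (e * p) * g ^ p = lam ^ (e * p) * (d ^ p * a)" using eq1 by (simp only: ep)
      thus ?thesis using lam_nz by simp
    qed
  qed
  obtain fg fd where fgd: "g = ev fg" "d = ev fd" using g(1) d(1) by (auto elim!: ZsE)
  define gi where "gi = poly fg 1"
  define di where "di = poly fd 1"
  have c1: "dZ lam (g - of_int gi)" unfolding gi_def fgd by (rule cong1)
  have c2: "dZ lam (d - of_int di)" unfolding di_def fgd by (rule cong1)
  have P1: "dZ (lam ^ 3) (g ^ p - of_int gi ^ p)" by (rule pow_cong[OF g(1) Zs_of_int c1])
  have P2: "dZ (lam ^ 3) (d ^ p - of_int di ^ p)" by (rule pow_cong[OF d(1) Zs_of_int c2])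
  define n where "n = gi ^ p - 2 * di ^ p"
  have key: "of_int n - of_int di ^ p * lam ^ 2 * mu = - (g ^ p - of_int gi ^ p) + (d ^ p - of_int di ^ p) * a"
    unfolding n_def eq using a_eq by (simp add: algebra_simps)
  have D1: "dZ (lam ^ 3) (of_int n - of_int di ^ p * lam ^ 2 * mu)"
    unfolding key by (intro dZ_add dZ_uminus P1 dZ_mult_right[OF P2 aZ])
  have l23: "dZ (lam ^ 2) (lam ^ 3)" by (intro dZ_pow_mono lam_Zs) simp
  have D2: "dZ (lam ^ 2) (of_int di ^ p * lam ^ 2 * mu)" unfolding dZ_def
    by (intro bexI[of _ "of_int di ^ p * mu"]) (auto intro!: Zs_mult Zs_pow Zs_of_int muZ)
  have "dZ (lam ^ 2) (of_int n)"
    using dZ_add[OF dZ_trans[OF l23 D1] D2] by simp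
  hence "dZ lam (of_int n)" using dZ_trans[OF dZ_pow_mono[of 1 2, OF _ lam_Zs]] by simp
  hence "int p dvd n" using lam_int by blast
  then obtain c where c: "n = int p * c" by auto
  have "dZ (lam ^ 3) (of_int n)" unfolding c
    using dZ_mult_right[OF lam_pow_dvd_p[of 3] Zs_of_int[of c]] p3 by simp
  hence "dZ (lam ^ 3) (of_int n - (of_int n - of_int di ^ p * lam ^ 2 * mu))"
    by (rule dZ_diff[OF _ D1])
  hence X: "dZ (lam ^ 3) (lam ^ 2 * (of_int di ^ p * mu))" by (simp add: mult_ac)
  have l3: "lam ^ 3 = lam ^ 2 * lam" by (simp add: power3_eq_cube power2_eq_square)
  have "dZ (lam ^ 2 * lam) (lam ^ 2 * (of_int di ^ p * mu))" using X unfolding l3 .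
  moreover have ln2: "lam ^ 2 \<noteq> 0" using lam_nz by simp
  ultimately have dl: "dZ lam (of_int di ^ p * mu)" using dZ_cancel by blast
  define F where "F = [:di:] ^ p * monom 1 (p - k) * (\<Sum>i<k. monom 1 i) ^ 2"
  have evF: "of_int di ^ p * mu = ev F"
    unfolding mu_def s_def F_def by (simp add: ev_sum)
  have "int p dvd poly F 1" using dl unfolding evF lam_dvd_iff .
  moreover have "poly F 1 = di ^ p * int k ^ 2" unfolding F_def by (simp add: poly_sum poly_monom)
  ultimately have "int p dvd di ^ p * int k ^ 2" by simp
  hence "int p dvd di \<or> int p dvd int k" using pp
    by (metis prime_dvd_mult_iff prime_dvd_power prime_nat_int_transfer)
  moreover have "\<not> int p dvd int k" using k by (auto simp: int_dvd_int_iff dest: dvd_imp_le)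
  ultimately have "int p dvd di" by blast
  hence "dZ lam (of_int di)" using lam_int by blast
  from dZ_add[OF c2 this] have "dZ lam d" by simp
  thus False using d(3) by simp
qed

end

lemma subfield_subring: "is_subfield F \<Longrightarrow> subring_set F"
  unfolding is_subfield_def subring_set_def by auto

lemma subfield_inv: "is_subfield F \<Longrightarrow> x \<in> F \<Longrightarrow> inverse x \<in> F"
  unfolding is_subfield_def by (cases "x = 0") auto

lemma subfield_div: "is_subfield F \<Longrightarrow> x \<in> F \<Longrightarrow> y \<in> F \<Longrightarrow> x / y \<in> F"
  using subfield_inv[of F y] Smult[OF subfield_subring] by (simp add: divide_inverse)

lemma gen_field_subfield: "is_subfield (gen_field S)"
  unfolding gen_field_def is_subfield_def by auto

lemma gen_field_sub: "S \<subseteq> gen_field S"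
  unfolding gen_field_def by auto

lemma gen_field_least: "is_subfield F \<Longrightarrow> S \<subseteq> F \<Longrightarrow> gen_field S \<subseteq> F"
  unfolding gen_field_def by auto

lemma coeff_scale: "coeff ((g :: complex poly) \<circ>\<^sub>p [:0, c:]) i = c ^ i * coeff g i"
proof (induction g arbitrary: i)
  case 0 thus ?case by simp
next
  case (pCons a g)
  have "pCons a g \<circ>\<^sub>p [:0, c:] = [:a:] + pCons 0 (smult c (g \<circ>\<^sub>p [:0, c:]))"
    by (simp add: pcompose_pCons)
  thus ?case using pCons.IH by (cases i) (auto simp: coeff_pCons mult_ac)
qed

lemma poly_scale: "poly ((g :: complex poly) \<circ>\<^sub>p [:0, c:]) w = poly g (c * w)"
  by (simp add: poly_pcompose mult.commute)

lemma scale_scale: "((g :: complex poly) \<circ>\<^sub>p [:0, c:]) \<circ>\<^sub>p [:0, d:] = g \<circ>\<^sub>p [:0, c * d:]"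
proof -
  have "[:0, c:] \<circ>\<^sub>p [:0, d:] = [:0, c * d:]" by (simp add: pcompose_pCons)
  thus ?thesis by (simp add: pcompose_assoc[symmetric])
qed

lemma scale_1: "(g :: complex poly) \<circ>\<^sub>p [:0, 1:] = g" by (rule pcompose_idR)

locale kummer = cyc +
  fixes K :: "complex set" and \<alpha> a :: complex
  assumes K: "is_subfield K" and zK: "z \<in> K" and aK: "a \<in> K" and al: "\<alpha> ^ p = a"
    and noroot: "\<And>\<beta>. \<beta> \<in> K \<Longrightarrow> \<beta> ^ p \<noteq> a"
begin

lemma Ks: "subring_set K" using subfield_subring[OF K] .

lemmas K0 = S0[OF Ks] and K1 = S1[OF Ks] and Kadd = Sadd[OF Ks] and Kmult = Smult[OF Ks]
  and Kneg = Sneg[OF Ks] and Kdiff = Sdiff[OF Ks] and Kpow = Spow[OF Ks]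
  and Ksum = Ssum[OF Ks] and Kprod = Sprod[OF Ks]

lemma Kinv: "x \<in> K \<Longrightarrow> inverse x \<in> K" using subfield_inv[OF K] .
lemma Kdiv: "x \<in> K \<Longrightarrow> y \<in> K \<Longrightarrow> x / y \<in> K" using subfield_div[OF K] .

lemma a0: "a \<noteq> 0" using noroot[OF K0] p0 by (auto simp: zero_power)
lemma al0: "\<alpha> \<noteq> 0" using a0 al p0 by (auto simp: zero_power)

definition mp :: "complex poly" where "mp = monom 1 p - [:a:]"

lemma mp_S: "polyS K mp" unfolding mp_def
  by (intro polyS_diff[OF Ks] polyS_monom[OF Ks] polyS_const[OF Ks] K1 aK)

lemma coeff_mp: "coeff mp i = (if i = p then 1 else if i = 0 then - a else 0)"
  unfolding mp_def using p0 by (auto simp: coeff_monom coeff_pCons split: nat.split)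

lemma degree_mp: "degree mp = p"
proof (rule antisym)
  show "degree mp \<le> p" by (rule degree_le) (auto simp: coeff_mp)
  show "p \<le> degree mp" by (rule le_degree) (simp add: coeff_mp)
qed

lemma lead_mp: "lead_coeff mp = 1"
  unfolding degree_mp by (simp add: coeff_mp)

lemma poly_mp: "poly mp w = w ^ p - a" unfolding mp_def by (simp add: poly_monom)

lemma polyS_scale: "polyS K g \<Longrightarrow> c \<in> K \<Longrightarrow> polyS K (g \<circ>\<^sub>p [:0, c:])"
  unfolding polyS_def coeff_scale by (auto intro: Kmult Kpow)

lemma root_form: assumes "w ^ p = a" shows "\<exists>j<p. w = z ^ j * \<alpha>"
proof -
  have "(w / \<alpha>) ^ p = 1" using assms al al0 a0 by (simp add: power_divide)
  then obtain j where "j < p" "w / \<alpha> = z ^ j" using roots_z by blast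
  thus ?thesis using al0 by (auto simp: field_simps)
qed

lemma prod_roots: "(\<forall>x\<in>set as. \<exists>j. x = z ^ j * \<alpha>) \<Longrightarrow>
  \<exists>J. poly (\<Prod>x\<leftarrow>as. [:- x, 1:]) 0 = (- 1) ^ length as * z ^ J * \<alpha> ^ length as"
proof (induction as)
  case Nil thus ?case by (intro exI[of _ 0]) simp
next
  case (Cons x as)
  then obtain J where J: "poly (\<Prod>x\<leftarrow>as. [:- x, 1:]) 0 = (- 1) ^ length as * z ^ J * \<alpha> ^ length as" by auto
  obtain j where j: "x = z ^ j * \<alpha>" using Cons.prems by auto
  have "poly (\<Prod>x\<leftarrow>x # as. [:- x, 1:]) 0 = (- x) * poly (\<Prod>x\<leftarrow>as. [:- x, 1:]) 0" by simp
  also have "\<dots> = (- 1) ^ length (x # as) * z ^ (j + J) * \<alpha> ^ length (x # as)"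
    unfolding J j by (simp add: power_add)
  finally show ?case by blast
qed

lemma alpha_pow_not_K: assumes d: "0 < d" "d < p" and ad: "\<alpha> ^ d \<in> K" shows False
proof -
  have "gcd d p dvd p" by simp
  hence "gcd d p = 1 \<or> gcd d p = p" using pp by (simp add: prime_nat_iff)
  moreover have "gcd d p \<noteq> p"
  proof
    assume "gcd d p = p" hence "p dvd d" by (metis gcd_dvd1)
    thus False using d by (auto dest: dvd_imp_le)
  qed
  ultimately have g1: "gcd d p = 1" by simp
  obtain u v where uv: "d * u = p * v + 1" using bezout_nat[of d p] d g1 by auto
  have "(\<alpha> ^ d) ^ u = a ^ v * \<alpha>"
    by (simp add: power_mult[symmetric] uv power_add al[symmetric])
  hence "\<alpha> = (\<alpha> ^ d) ^ u / a ^ v" using a0 by (simp add: field_simps)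
  hence "\<alpha> \<in> K" using ad aK by (metis Kdiv Kpow)
  thus False using noroot al by blast
qed

lemma IND: assumes g: "polyS K g" "g \<noteq> 0" "degree g < p" "poly g \<alpha> = 0" shows False
proof -
  define P where "P n \<longleftrightarrow> (\<exists>g. polyS K g \<and> g \<noteq> 0 \<and> poly g \<alpha> = 0 \<and> degree g = n)" for n
  have Pg: "P (degree g)" unfolding P_def using g by auto
  define n0 where "n0 = (LEAST n. P n)"
  have "P n0" unfolding n0_def by (rule LeastI[of P, OF Pg])
  then obtain m where m: "polyS K m" "m \<noteq> 0" "poly m \<alpha> = 0" "degree m = n0" unfolding P_def by auto
  have mmin: "\<And>r. polyS K r \<Longrightarrow> r \<noteq> 0 \<Longrightarrow> poly r \<alpha> = 0 \<Longrightarrow> degree m \<le> degree r"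
    unfolding m(4) n0_def by (rule Least_le) (auto simp: P_def)
  have dmg: "degree m \<le> degree g" using mmin g by auto
  define l where "l = lead_coeff m"
  have l0: "l \<noteq> 0" using m(2) unfolding l_def by simp
  have lK: "l \<in> K" using m(1) unfolding l_def polyS_def by auto
  define m' where "m' = smult (inverse l) m"
  have m'S: "polyS K m'" unfolding m'_def by (intro polyS_smult[OF Ks] Kinv lK m(1))
  have dm': "degree m' = degree m" unfolding m'_def using l0 by simp
  have lm': "lead_coeff m' = 1" unfolding m'_def dm' using l0 by (simp add: l_def)
  have pm': "poly m' \<alpha> = 0" unfolding m'_def using m(3) by simp
  obtain q r where qr: "polyS K q" "polyS K r" "mp = m' * q + r" "r = 0 \<or> degree r < degree m'"
    using monic_divide[OF Ks lm' m'S mp_S] by blast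
  have "poly r \<alpha> = 0" using qr(3) pm' poly_mp[of \<alpha>] al
    by (metis add_0 diff_self mult_zero_left poly_add poly_mult)
  hence r0: "r = 0" using qr(2,4) mmin[of r] dm' by fastforce
  have dm1: "degree m \<noteq> 0"
  proof
    assume "degree m = 0"
    then obtain c where "m = [:c:]" by (metis degree_eq_zeroE)
    thus False using m(2,3) by simp
  qed
  obtain as where as: "smult (lead_coeff m') (\<Prod>x\<leftarrow>as. [:- x, 1:]) = m'" "length as = degree m'"
    using fundamental_theorem_algebra_factorized[of m'] by blast
  have m'e: "m' = (\<Prod>x\<leftarrow>as. [:- x, 1:])" using as(1) lm' by simp
  have "\<forall>x\<in>set as. \<exists>j. x = z ^ j * \<alpha>"
  proof
    fix x assume x: "x \<in> set as"
    have "poly m' x = (\<Prod>y\<leftarrow>as. x - y)" unfolding m'e poly_prod_list by (simp add: o_def)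
    also have "\<dots> = 0" using x by (simp add: prod_list_zero_iff)
    finally have "poly mp x = 0" using qr(3) r0 by simp
    hence "x ^ p = a" by (simp add: poly_mp)
    thus "\<exists>j. x = z ^ j * \<alpha>" using root_form by blast
  qed
  then obtain J where J: "poly m' 0 = (- 1) ^ length as * z ^ J * \<alpha> ^ length as"
    using prod_roots m'e by metis
  have c0K: "poly m' 0 \<in> K" using m'S unfolding poly_0_coeff_0 polyS_def by auto
  have zJ: "z ^ J \<noteq> 0" using z_nz by simp
  have fnz: "(- 1) ^ length as * z ^ J \<noteq> 0" using zJ by simp
  have "\<alpha> ^ length as = poly m' 0 / ((- 1) ^ length as * z ^ J)" using J fnz z_nz by (simp add: eq_divide_eq mult_ac)
  hence "\<alpha> ^ length as \<in> K" using c0K by (metis Kdiv Kmult Kneg K1 Kpow zK)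
  moreover have "0 < length as" "length as < p" using as(2) dm' dm1 dmg g(3) by auto
  ultimately show False using alpha_pow_not_K by blast
qed


lemma reduce: assumes "polyS K g"
  shows "\<exists>q r. polyS K q \<and> polyS K r \<and> g = mp * q + r \<and> (r = 0 \<or> degree r < p)"
  using monic_divide[OF Ks lead_mp mp_S assms] degree_mp by metis

lemma poly_mp_root: "w ^ p = a \<Longrightarrow> poly mp w = 0" by (simp add: poly_mp)

lemma WD: assumes g: "polyS K g" "poly g \<alpha> = 0" and w: "w ^ p = a" shows "poly g w = 0"
proof -
  obtain q r where qr: "polyS K q" "polyS K r" "g = mp * q + r" "r = 0 \<or> degree r < p"
    using reduce[OF g(1)] by blast
  have "poly r \<alpha> = 0" using g(2) qr(3) poly_mp_root[OF al] by simp
  hence "r = 0" using IND[OF qr(2)] qr(4) by blast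
  thus ?thesis using qr(3) poly_mp_root[OF w] by simp
qed

lemma WD2: assumes "polyS K g" "polyS K h" "poly g \<alpha> = poly h \<alpha>" "w ^ p = a"
  shows "poly g w = poly h w"
  using WD[OF polyS_diff[OF Ks assms(1,2)] _ assms(4)] assms(3) by simp

definition Lset :: "complex set" where "Lset = {poly g \<alpha> | g. polyS K g}"

lemma LsetI: "polyS K g \<Longrightarrow> poly g \<alpha> \<in> Lset" unfolding Lset_def by blast
lemma LsetE: assumes "x \<in> Lset" obtains g where "polyS K g" "x = poly g \<alpha>"
  using assms unfolding Lset_def by blast

lemma K_Lset: "K \<subseteq> Lset"
proof
  fix c assume "c \<in> K"
  thus "c \<in> Lset" using LsetI[OF polyS_const[OF Ks]] by fastforce
qed

lemma al_Lset: "\<alpha> \<in> Lset"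
  using LsetI[OF polyS_pCons[OF Ks K0 polyS_1[OF Ks]]] by simp

lemma Lset_add: "x \<in> Lset \<Longrightarrow> y \<in> Lset \<Longrightarrow> x + y \<in> Lset"
  and Lset_mult: "x \<in> Lset \<Longrightarrow> y \<in> Lset \<Longrightarrow> x * y \<in> Lset"
  and Lset_uminus: "x \<in> Lset \<Longrightarrow> - x \<in> Lset"
    by (auto elim!: LsetE intro!: LsetI[of "_ + _", simplified] LsetI[of "_ * _", simplified]
      LsetI[of "- _", simplified] polyS_add[OF Ks] polyS_mult[OF Ks] polyS_uminus[OF Ks])

lemma mp_scale: "mp \<circ>\<^sub>p [:0, z:] = mp"
  by (rule poly_eqI) (auto simp: coeff_scale coeff_mp z_p)

lemma Lset_inv: assumes x: "x \<in> Lset" "x \<noteq> 0" shows "inverse x \<in> Lset"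
proof -
  obtain g where g: "polyS K g" "x = poly g \<alpha>" using x(1) by (auto elim: LsetE)
  have g0: "g \<noteq> 0" using g x(2) by auto
  define f where "f j = g \<circ>\<^sub>p [:0, z ^ j:]" for j
  have fS: "polyS K (f j)" for j unfolding f_def by (intro polyS_scale g(1) Kpow zK)
  have pf: "poly (f j) w = poly g (z ^ j * w)" for j w unfolding f_def poly_scale ..
  define H where "H = (\<Prod>j<p. f j)"
  have HS: "polyS K H" unfolding H_def by (intro polyS_prod[OF Ks] fS)
  have fsc: "f j \<circ>\<^sub>p [:0, z:] = f (Suc j)" for j unfolding f_def scale_scale by (simp add: mult.commute)
  have fp: "f p = f 0" unfolding f_def z_p by simp
  have "f 0 * (\<Prod>j<p. f (Suc j)) = (\<Prod>j<Suc p. f j)" by (rule prod.lessThan_Suc_shift[symmetric])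
  also have "\<dots> = H * f 0" unfolding H_def prod.lessThan_Suc fp ..
  finally have "f 0 * (\<Prod>j<p. f (Suc j)) = f 0 * H" by (simp only: mult.commute[of H])
  moreover have "f 0 = g" unfolding f_def power_0 by (rule scale_1)
  ultimately have "(\<Prod>j<p. f (Suc j)) = H" using g0 by simp
  hence Hsc: "H \<circ>\<^sub>p [:0, z:] = H" unfolding H_def pcompose_hom.hom_prod fsc by simp
  obtain q r where qr: "polyS K q" "polyS K r" "H = mp * q + r" "r = 0 \<or> degree r < p"
    using reduce[OF HS] by blast
  define q' where "q' = q \<circ>\<^sub>p [:0, z:]"
  define r' where "r' = r \<circ>\<^sub>p [:0, z:]"
  have "H = mp * q' + r'" unfolding q'_def r'_def
    by (subst Hsc[symmetric]) (simp add: qr(3) pcompose_add pcompose_mult mp_scale)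
  hence eq: "mp * (q - q') = r' - r" using qr(3) by (simp add: algebra_simps)
  have dr': "degree r' = degree r" unfolding r'_def using z_nz by (simp add: degree_pcompose)
  have rr: "r' = r"
  proof (rule ccontr)
    assume ne: "r' \<noteq> r"
    hence "q - q' \<noteq> 0" using eq by auto
    moreover have "mp \<noteq> 0" using lead_mp by auto
    ultimately have "degree (mp * (q - q')) = p + degree (q - q')" using degree_mp by (simp add: degree_mult_eq)
    hence "degree (mp * (q - q')) \<ge> p" by simp
    moreover have "degree (r' - r) < p"
    proof -
      have "r \<noteq> 0" using ne unfolding r'_def by auto
      hence "degree r < p" using qr(4) by simp
      hence "degree r' \<le> p - 1" "degree r \<le> p - 1" using dr' by auto
      hence "degree (r' - r) \<le> p - 1" by (rule degree_diff_le)
      thus ?thesis using p0 by linarith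
    qed
    ultimately show False using eq by simp
  qed
  have rc: "coeff r i = 0" if "i > 0" for i
  proof (cases "i < p")
    case True
    have "coeff r' i = coeff r i" using rr by simp
    hence "z ^ i * coeff r i = coeff r i" unfolding r'_def coeff_scale .
    moreover have "z ^ i \<noteq> 1" using True that z_pow_eq_1[of i] by (auto dest: dvd_imp_le)
    ultimately show ?thesis by (metis mult_cancel_right2)
  next
    case False
    thus ?thesis using qr(4) by (auto intro: coeff_eq_0)
  qed
  have "r = [:coeff r 0:]"
    by (rule poly_eqI) (auto simp: coeff_pCons rc split: nat.split)
  moreover have "poly H \<alpha> = poly r \<alpha>" using qr(3) poly_mp_root[OF al] by simp
  ultimately have "poly H \<alpha> = coeff r 0" by (metis poly_pCons poly_0 mult_zero_right add_0_right)
  moreover have NK: "coeff r 0 \<in> K" using qr(2) unfolding polyS_def by auto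
  ultimately have HK: "poly H \<alpha> \<in> K" by simp
  define Y where "Y = poly (\<Prod>j<p - 1. f (Suc j)) \<alpha>"
  have YL: "Y \<in> Lset" unfolding Y_def by (intro LsetI polyS_prod[OF Ks] fS)
  have "poly H \<alpha> = poly (\<Prod>j<Suc (p - 1). f j) \<alpha>" unfolding H_def using p0 by simp
  also have "\<dots> = x * Y" unfolding prod.lessThan_Suc_shift Y_def by (simp add: pf g(2))
  finally have HxY: "poly H \<alpha> = x * Y" .
  have fnz: "poly (f j) \<alpha> \<noteq> 0" if j: "j < p" for j
  proof
    assume "poly (f j) \<alpha> = 0"
    moreover have "(z ^ (p - j) * \<alpha>) ^ p = a"
      by (simp add: power_mult_distrib power_mult[symmetric] mult.commute[of "p - j"] power_mult z_p al)
    ultimately have "poly (f j) (z ^ (p - j) * \<alpha>) = 0" using WD[OF fS] by blast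
    moreover have "poly (f j) (z ^ (p - j) * \<alpha>) = x"
      unfolding pf g(2) using j by (simp add: mult.assoc[symmetric] power_add[symmetric] z_p)
    ultimately show False using x(2) by simp
  qed
  have "poly H \<alpha> \<noteq> 0" unfolding H_def poly_prod using fnz by simp
  hence "inverse x = Y * inverse (poly H \<alpha>)" unfolding HxY using x(2) by (simp add: field_simps)
  thus ?thesis using YL K_Lset Kinv[OF HK] Lset_mult by auto
qed

lemma Lset_subfield: "is_subfield Lset"
  unfolding is_subfield_def using K_Lset K0 K1 Lset_add Lset_mult Lset_uminus Lset_inv by auto

lemma Lset_least: assumes F: "is_subfield F" "K \<subseteq> F" "\<alpha> \<in> F" shows "Lset \<subseteq> F"
proof
  fix x assume "x \<in> Lset"
  then obtain g where g: "polyS K g" "x = poly g \<alpha>" by (auto elim: LsetE)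
  have Fs: "subring_set F" using subfield_subring[OF F(1)] .
  have "poly g \<alpha> = (\<Sum>i\<le>degree g. coeff g i * \<alpha> ^ i)" by (rule poly_altdef)
  also have "\<dots> \<in> F" using g(1) F(2,3) unfolding polyS_def
    by (intro Ssum[OF Fs] Smult[OF Fs] Spow[OF Fs]) auto
  finally show "x \<in> F" using g by simp
qed

end

lemma poly_as_sum: fixes r :: "complex poly" assumes "r = 0 \<or> degree r < n"
  shows "poly r x = (\<Sum>i<n. coeff r i * x ^ i)"
proof -
  have "r = (\<Sum>i<n. monom (coeff r i) i)"
  proof (rule poly_eqI)
    fix j
    show "coeff r j = coeff (\<Sum>i<n. monom (coeff r i) i) j"
      using assms by (cases "j < n") (auto simp: coeff_sum coeff_monom intro: coeff_eq_0)
  qed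
  hence "poly r x = poly (\<Sum>i<n. monom (coeff r i) i) x" by simp
  also have "\<dots> = (\<Sum>i<n. coeff r i * x ^ i)" by (simp add: poly_sum poly_monom)
  finally show ?thesis .
qed

context kummer begin

definition B :: "complex set" where "B = (\<lambda>i. \<alpha> ^ i) ` {..<p}"

lemma pow_inj: "inj_on (\<lambda>i. \<alpha> ^ i) {..<p}"
proof -
  have *: False if ij: "i < j" "j < p" "\<alpha> ^ i = \<alpha> ^ j" for i j
  proof -
    define g where "g = monom (1::complex) j - monom 1 i"
    have gS: "polyS K g" unfolding g_def by (intro polyS_diff[OF Ks] polyS_monom[OF Ks] K1)
    have "coeff g j = 1" unfolding g_def using ij by (simp add: coeff_monom)
    hence g0: "g \<noteq> 0" by auto
    have "degree g \<le> j" unfolding g_def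
      by (rule degree_diff_le) (auto intro: order.trans[OF degree_monom_le] less_imp_le ij)
    hence "degree g < p" using ij by simp
    moreover have "poly g \<alpha> = 0" unfolding g_def using ij by (simp add: poly_monom)
    ultimately show False using IND[OF gS g0] by blast
  qed
  show ?thesis unfolding inj_on_def
    by (metis "*" lessThan_iff linorder_neqE_nat)
qed

lemma card_B: "card B = p" and finite_B: "finite B"
  unfolding B_def using card_image[OF pow_inj] by auto

lemma sum_B: "(\<Sum>b\<in>B. f b) = (\<Sum>i<p. f (\<alpha> ^ i))"
  unfolding B_def by (rule sum.reindex[OF pow_inj, unfolded o_def])

lemma comb_poly: assumes "\<And>i. i < p \<Longrightarrow> c i \<in> K"
  shows "polyS K (\<Sum>i<p. monom (c i) i)" "poly (\<Sum>i<p. monom (c i) i) \<alpha> = (\<Sum>i<p. c i * \<alpha> ^ i)"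
    "coeff (\<Sum>i<p. monom (c i) i) j = (if j < p then c j else 0)"
    "(\<Sum>i<p. monom (c i) i) = 0 \<or> degree (\<Sum>i<p. monom (c i) i) < p"
proof -
  show "polyS K (\<Sum>i<p. monom (c i) i)" by (intro polyS_sum[OF Ks] polyS_monom[OF Ks] assms) auto
  show "poly (\<Sum>i<p. monom (c i) i) \<alpha> = (\<Sum>i<p. c i * \<alpha> ^ i)" by (simp add: poly_sum poly_monom)
  show cf: "coeff (\<Sum>i<p. monom (c i) i) j = (if j < p then c j else 0)" for j
    by (simp add: coeff_sum coeff_monom)
  have "degree (\<Sum>i<p. monom (c i) i) \<le> p - 1" by (rule degree_le) (auto simp: cf)
  thus "(\<Sum>i<p. monom (c i) i) = 0 \<or> degree (\<Sum>i<p. monom (c i) i) < p" using p0 by auto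
qed

lemma indep_B: "lin_indep_over K B"
  unfolding lin_indep_over_def
proof (intro allI impI ballI)
  fix c b assume c: "(\<forall>b\<in>B. c b \<in> K) \<and> (\<Sum>b\<in>B. c b * b) = 0" and b: "b \<in> B"
  have cK: "c (\<alpha> ^ i) \<in> K" if "i < p" for i using c that unfolding B_def by auto
  note G = comb_poly[of "\<lambda>i. c (\<alpha> ^ i)", OF cK]
  have "poly (\<Sum>i<p. monom (c (\<alpha> ^ i)) i) \<alpha> = 0" using G(2) c by (simp add: sum_B)
  hence "(\<Sum>i<p. monom (c (\<alpha> ^ i)) i) = 0" using IND[OF G(1)] G(4) by blast
  moreover obtain i where "i < p" "b = \<alpha> ^ i" using b unfolding B_def by auto
  ultimately show "c b = 0" using G(3)[of i] by simp
qed

lemma B_Lset: "B \<subseteq> Lset"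
proof
  fix b assume "b \<in> B"
  then obtain i where "b = \<alpha> ^ i" unfolding B_def by auto
  thus "b \<in> Lset" using LsetI[OF polyS_monom[OF Ks K1, of i]] by (simp add: poly_monom)
qed

lemma span_B: "span_over K B = Lset"
proof
  show "span_over K B \<subseteq> Lset"
  proof
    fix x assume "x \<in> span_over K B"
    then obtain c where c: "\<forall>b\<in>B. c b \<in> K" "x = (\<Sum>b\<in>B. c b * b)" unfolding span_over_def by auto
    have cK: "c (\<alpha> ^ i) \<in> K" if "i < p" for i using c that unfolding B_def by auto
    note G = comb_poly[of "\<lambda>i. c (\<alpha> ^ i)", OF cK]
    have "x = poly (\<Sum>i<p. monom (c (\<alpha> ^ i)) i) \<alpha>" using G(2) c(2) by (simp add: sum_B)
    thus "x \<in> Lset" using LsetI[OF G(1)] by simp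
  qed
next
  show "Lset \<subseteq> span_over K B"
  proof
    fix x assume "x \<in> Lset"
    then obtain g where g: "polyS K g" "x = poly g \<alpha>" by (auto elim: LsetE)
    obtain q r where qr: "polyS K q" "polyS K r" "g = mp * q + r" "r = 0 \<or> degree r < p"
      using reduce[OF g(1)] by blast
    have "x = poly r \<alpha>" using g(2) qr(3) poly_mp_root[OF al] by simp
    also have "\<dots> = (\<Sum>i<p. coeff r i * \<alpha> ^ i)" by (rule poly_as_sum[OF qr(4)])
    finally have xe: "x = (\<Sum>i<p. coeff r i * \<alpha> ^ i)" .
    define c where "c b = coeff r (inv_into {..<p} (\<lambda>i. \<alpha> ^ i) b)" for b
    have "(\<Sum>b\<in>B. c b * b) = (\<Sum>i<p. coeff r i * \<alpha> ^ i)"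
      unfolding sum_B c_def using pow_inj by (intro sum.cong refl) (simp add: inv_into_f_f)
    moreover have "\<forall>b\<in>B. c b \<in> K" using qr(2) unfolding c_def polyS_def by auto
    ultimately show "x \<in> span_over K B" unfolding span_over_def xe by auto
  qed
qed

lemma ext_deg: "ext_degree K Lset p"
  unfolding ext_degree_def basis_over_def
  using K Lset_subfield K_Lset finite_B B_Lset indep_B span_B card_B by blast


definition rep :: "complex \<Rightarrow> complex poly" where
  "rep x = (SOME g. polyS K g \<and> x = poly g \<alpha>)"

lemma rep: assumes "x \<in> Lset" shows "polyS K (rep x)" "x = poly (rep x) \<alpha>"
proof -
  have "\<exists>g. polyS K g \<and> x = poly g \<alpha>" using assms by (auto elim: LsetE)
  hence "polyS K (rep x) \<and> x = poly (rep x) \<alpha>" unfolding rep_def by (rule someI_ex)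
  thus "polyS K (rep x)" "x = poly (rep x) \<alpha>" by auto
qed

definition sig :: "nat \<Rightarrow> complex \<Rightarrow> complex" where
  "sig j x = (if x \<in> Lset then poly (rep x) (z ^ j * \<alpha>) else x)"

lemma root_j: "(z ^ j * \<alpha>) ^ p = a"
  by (simp add: power_mult_distrib power_mult[symmetric] mult.commute[of j] power_mult z_p al)

lemma sig_eval: assumes "polyS K g" shows "sig j (poly g \<alpha>) = poly g (z ^ j * \<alpha>)"
proof -
  have L: "poly g \<alpha> \<in> Lset" by (rule LsetI[OF assms])
  show ?thesis unfolding sig_def using L rep[OF L] WD2[OF _ assms _ root_j] by simp
qed

lemma sig_out: "x \<notin> Lset \<Longrightarrow> sig j x = x" unfolding sig_def by simp

lemma sig_Lset: assumes "x \<in> Lset" shows "sig j x \<in> Lset"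
proof -
  obtain g where g: "polyS K g" "x = poly g \<alpha>" using assms by (auto elim: LsetE)
  have "sig j x = poly (g \<circ>\<^sub>p [:0, z ^ j:]) \<alpha>" unfolding g(2) sig_eval[OF g(1)] poly_scale ..
  thus ?thesis using LsetI[OF polyS_scale[OF g(1) Kpow[OF zK]]] by simp
qed

lemma sig_add: "x \<in> Lset \<Longrightarrow> y \<in> Lset \<Longrightarrow> sig j (x + y) = sig j x + sig j y"
  and sig_mult: "x \<in> Lset \<Longrightarrow> y \<in> Lset \<Longrightarrow> sig j (x * y) = sig j x * sig j y"
proof -
  assume "x \<in> Lset" "y \<in> Lset"
  then obtain g h where gh: "polyS K g" "x = poly g \<alpha>" "polyS K h" "y = poly h \<alpha>" by (auto elim!: LsetE)
  show "sig j (x + y) = sig j x + sig j y"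
    using sig_eval[OF polyS_add[OF Ks gh(1,3)]] sig_eval[OF gh(1)] sig_eval[OF gh(3)] gh by simp
  show "sig j (x * y) = sig j x * sig j y"
    using sig_eval[OF polyS_mult[OF Ks gh(1,3)]] sig_eval[OF gh(1)] sig_eval[OF gh(3)] gh by simp
qed

lemma sig_K: "c \<in> K \<Longrightarrow> sig j c = c"
  using sig_eval[OF polyS_const[OF Ks], of c j] by simp

lemma sig_alpha: "sig j \<alpha> = z ^ j * \<alpha>"
  using sig_eval[OF polyS_pCons[OF Ks K0 polyS_1[OF Ks]], of j] by simp

lemma sig_comp: "sig i (sig j x) = sig (i + j) x"
proof (cases "x \<in> Lset")
  case True
  obtain g where g: "polyS K g" "x = poly g \<alpha>" using True by (auto elim: LsetE)
  have "sig j x = poly (g \<circ>\<^sub>p [:0, z ^ j:]) \<alpha>" unfolding g(2) sig_eval[OF g(1)] poly_scale ..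
  hence "sig i (sig j x) = poly (g \<circ>\<^sub>p [:0, z ^ j:]) (z ^ i * \<alpha>)"
    using sig_eval[OF polyS_scale[OF g(1) Kpow[OF zK]]] by simp
  also have "\<dots> = sig (i + j) x" unfolding g(2) sig_eval[OF g(1)] poly_scale
    by (simp add: power_add mult_ac)
  finally show ?thesis .
next
  case False thus ?thesis by (simp add: sig_out)
qed

lemma sig_dvd: assumes "p dvd n" shows "sig n x = x"
proof (cases "x \<in> Lset")
  case True
  obtain g where g: "polyS K g" "x = poly g \<alpha>" using True by (auto elim: LsetE)
  have "z ^ n = 1" using assms z_pow_eq_1 by simp
  thus ?thesis unfolding g(2) sig_eval[OF g(1)] by simp
next
  case False thus ?thesis by (simp add: sig_out)
qed

lemma sig_bij: "bij_betw (sig j) Lset Lset"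
proof (rule bij_betw_byWitness[where f' = "sig (p - j mod p)"])
  have d: "p dvd (p - j mod p) + j" and d2: "p dvd j + (p - j mod p)"
  proof -
    have jm: "j mod p < p" using p0 by simp
    have "p - j mod p + j = p - j mod p + (p * (j div p) + j mod p)" by simp
    also have "\<dots> = p * (j div p) + p" using jm by linarith
    finally have eq: "p - j mod p + j = p * (j div p) + p" .
    show "p dvd (p - j mod p) + j" unfolding eq by simp
    thus "p dvd j + (p - j mod p)" by (simp add: add.commute)
  qed
  show "\<forall>x\<in>Lset. sig (p - j mod p) (sig j x) = x" using sig_comp sig_dvd[OF d] by simp
  show "\<forall>y\<in>Lset. sig j (sig (p - j mod p) y) = y" using sig_comp sig_dvd[OF d2] by simp
  show "sig j ` Lset \<subseteq> Lset" "sig (p - j mod p) ` Lset \<subseteq> Lset" using sig_Lset by auto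
qed

lemma sig_auts: "sig j \<in> auts K Lset"
  unfolding auts_def using sig_bij sig_add sig_mult sig_K sig_out by blast

lemma sig_funpow: "sig 1 ^^ m = sig m"
proof (induction m)
  case 0 show ?case using sig_dvd[of 0] by (auto simp: fun_eq_iff)
next
  case (Suc m) show ?case using Suc by (auto simp: fun_eq_iff sig_comp)
qed

lemma sig_inj: "inj_on sig {..<p}"
proof
  fix i j assume ij: "i \<in> {..<p}" "j \<in> {..<p}" "sig i = sig j"
  hence "z ^ i * \<alpha> = z ^ j * \<alpha>" using sig_alpha by metis
  hence "z ^ i = z ^ j" using al0 by simp
  thus "i = j" using z_inj ij by auto
qed

lemma aut_poly: assumes t: "\<tau> \<in> auts K Lset" and g: "polyS K g" shows "\<tau> (poly g \<alpha>) = poly g (\<tau> \<alpha>)"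
  using g
proof (induction g)
  case 0
  have "\<tau> 0 = 0" using t K0 unfolding auts_def by auto
  thus ?case by simp
next
  case (pCons c g)
  have cK: "c \<in> K" using pCons.prems unfolding polyS_def by (metis coeff_pCons_0)
  have gS: "polyS K g" using pCons.prems unfolding polyS_def by (metis coeff_pCons_Suc)
  have hom: "\<forall>x\<in>Lset. \<forall>y\<in>Lset. \<tau> (x + y) = \<tau> x + \<tau> y \<and> \<tau> (x * y) = \<tau> x * \<tau> y"
    and fx: "\<forall>x\<in>K. \<tau> x = x" using t unfolding auts_def by auto
  have L1: "c \<in> Lset" using cK K_Lset by auto
  have L2: "\<alpha> * poly g \<alpha> \<in> Lset" using Lset_mult[OF al_Lset LsetI[OF gS]] .
  have "\<tau> (poly (pCons c g) \<alpha>) = \<tau> (c + \<alpha> * poly g \<alpha>)" by simp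
  also have "\<dots> = c + \<tau> \<alpha> * \<tau> (poly g \<alpha>)"
    using hom L1 L2 al_Lset LsetI[OF gS] fx cK by simp
  also have "\<dots> = poly (pCons c g) (\<tau> \<alpha>)" using pCons.IH[OF gS] by simp
  finally show ?case .
qed

lemma aut_is_sig: assumes t: "\<tau> \<in> auts K Lset" shows "\<exists>j<p. \<tau> = sig j"
proof -
  have "\<tau> (poly (monom 1 p) \<alpha>) = poly (monom 1 p) (\<tau> \<alpha>)"
    by (rule aut_poly[OF t polyS_monom[OF Ks K1]])
  hence "\<tau> a = \<tau> \<alpha> ^ p" by (simp add: poly_monom al)
  moreover have "\<tau> a = a" using t aK unfolding auts_def by auto
  ultimately obtain j where j: "j < p" "\<tau> \<alpha> = z ^ j * \<alpha>" using root_form by metis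
  have "\<tau> x = sig j x" for x
  proof (cases "x \<in> Lset")
    case True
    then obtain g where g: "polyS K g" "x = poly g \<alpha>" by (auto elim: LsetE)
    show ?thesis unfolding g(2) aut_poly[OF t g(1)] sig_eval[OF g(1)] j(2) ..
  next
    case False thus ?thesis using t sig_out unfolding auts_def by auto
  qed
  thus ?thesis using j(1) by blast
qed

lemma auts_eq: "auts K Lset = sig ` {..<p}"
  using aut_is_sig sig_auts by blast

lemma cyclic: "cyclic_ext K Lset"
proof -
  have g: "galois_ext K Lset" unfolding galois_ext_def
  proof (intro exI conjI)
    show "ext_degree K Lset p" by (rule ext_deg)
    show "finite (auts K Lset)" unfolding auts_eq by simp
    show "card (auts K Lset) = p" unfolding auts_eq using card_image[OF sig_inj] by simp
  qed
  have "\<forall>\<tau>\<in>auts K Lset. \<exists>m::nat. \<tau> = sig 1 ^^ m"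
  proof
    fix \<tau> assume "\<tau> \<in> auts K Lset"
    then obtain j where "\<tau> = sig j" using aut_is_sig by blast
    hence "\<tau> = sig 1 ^^ j" by (simp only: sig_funpow)
    thus "\<exists>m::nat. \<tau> = sig 1 ^^ m" by blast
  qed
  thus ?thesis unfolding cyclic_ext_def using g sig_auts by blast
qed

end

theorem mainTheorem11:
  fixes p k :: nat and \<alpha> :: complex
  assumes "prime p" and "p > 3"
    and "1 \<le> k" and "k \<le> (p - 1) div 2"
    and "\<alpha> ^ p = cis (2 * pi / real p) ^ k + inverse (cis (2 * pi / real p) ^ k)"
  shows "cyclic_ext (gen_field {cis (2 * pi / real p)}) (gen_field {cis (2 * pi / real p), \<alpha>})
       \<and> ext_degree (gen_field {cis (2 * pi / real p)}) (gen_field {cis (2 * pi / real p), \<alpha>}) p"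
proof -
  define z where "z = cis (2 * pi / real p)"
  interpret cyc p z using assms(1,2) by unfold_locales (simp_all add: z_def)
  define K where "K = gen_field {z}"
  define a where "a = z ^ k + inverse (z ^ k)"
  have Ksub: "is_subfield K" unfolding K_def by (rule gen_field_subfield)
  have zK: "z \<in> K" unfolding K_def using gen_field_sub by blast
  have aK: "a \<in> K" unfolding a_def
    using Sadd[OF subfield_subring[OF Ksub]] Spow[OF subfield_subring[OF Ksub] zK]
      subfield_inv[OF Ksub] by blast
  have kp: "k < p" using assms(4) p3 by linarith
  have al: "\<alpha> ^ p = a" unfolding a_def z_def using assms(5) .
  have nr: "\<beta> ^ p \<noteq> a" if "\<beta> \<in> K" for \<beta>
    using no_root[OF assms(3) kp, of \<beta>] that unfolding K_def a_def by blast
  interpret kummer p z K \<alpha> a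
    by unfold_locales (use Ksub zK aK al nr in auto)
  have L: "gen_field {z, \<alpha>} = Lset"
  proof
    show "gen_field {z, \<alpha>} \<subseteq> Lset"
      by (rule gen_field_least[OF Lset_subfield]) (use zK K_Lset al_Lset in auto)
    have "K \<subseteq> gen_field {z, \<alpha>}" unfolding K_def
      by (rule gen_field_least[OF gen_field_subfield]) (use gen_field_sub in blast)
    moreover have "\<alpha> \<in> gen_field {z, \<alpha>}" using gen_field_sub by blast
    ultimately show "Lset \<subseteq> gen_field {z, \<alpha>}" by (rule Lset_least[OF gen_field_subfield])
  qed
  show ?thesis using cyclic ext_deg unfolding z_def[symmetric] K_def[symmetric] L by blast
qed

end
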